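(* Let $q=2$. Under $G_2$ there are exactly $6$ line orbits, namely: $\mathcal L_1=\{\text{RC-lines}\}$ (size $3$); $\mathcal L_2=\{\text{IA-lines}\}$ (size $1$); $\mathcal L_3=\{\text{U}\Gamma_2\text{-lines}\}$ (size $3$); $\mathcal L_4=\{\text{RA-lines}\}\cup\{\text{IC-lines}\}$ (size $3+1=4$); $\mathcal L_5=\{\text{Tr-lines}\}\cup\{\text{U}\Gamma_1\text{-lines}\}\cup\{\text{Un}\Gamma\text{-lines}\}$ (size $3+3+6=12$); $\mathcal L_6=\{\text{E}\Gamma\text{-lines}\}\cup\{\text{En}\Gamma\text{-lines}\}$ (size $6+6=12$).
   Context: Notation. $\mathbb F_q$ is the field with $q$ elements, $\mathbb F_q^+=\mathbb F_q\cup\{\infty\}$. Points of $\mathrm{PG}(3,q)$ are written $\mathbf P(x_0,x_1,x_2,x_3)$ with $x$ a nonzero row vector up to scalars; $\boldsymbol\pi(c_0,c_1,c_2,c_3)$ is the plane $c_0x_0+c_1x_1+c_2x_2+c_3x_3=0$. Put $P(t)=\mathbf P(t^3,t^2,t,1)$ for $t\in\mathbb F_q$, $P(\infty)=\mathbf P(1,0,0,0)$, and $\mathscr C=\{P(t):t\in\mathbb F_q^+\}$ (the twisted cubic). The osculating planes are $\pi_{\rm osc}(t)=\boldsymbol\pi(1,-3t,3t^2,-t^3)$ ($t\in\mathbb F_q$) and $\pi_{\rm osc}(\infty)=\boldsymbol\pi(0,0,0,1)$; these $q+1$ planes are called $\Gamma$-planes. The tangent at $P(t)$, $t\in\mathbb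 F_q$, is the line through $P(t)$ and $\mathbf P(3t^2,2t,1,0)$; the tangent at $P(\infty)$ is the line through $\mathbf P(1,0,0,0)$ and $\mathbf P(0,1,0,0)$. A real chord is a line through two distinct points of $\mathscr C$; a real axis is the intersection of two distinct $\Gamma$-planes. For $\alpha\in\mathbb F_{q^2}\setminus\mathbb F_q$, the line of $\mathrm{PG}(3,q^2)$ through $P(\alpha),P(\alpha^q)$ (resp. the intersection of the planes $\pi_{\rm osc}(\alpha),\pi_{\rm osc}(\alpha^q)$, given by the same formulas over $\mathbb F_{q^2}$) is defined over $\mathbb F_q$, and the corresponding line of $\mathrm{PG}(3,q)$ is an imaginary chord (resp. imaginary axis). A unisecant is a line meeting $\mathscr C$ in exactly one point; an external line is a line disjoint from $\mathscr C$. $G_q$ is the group of all projectivities of $\mathrm{PG}(3,q)$ mapping $\mathscr C$ onto itself. Line types (for $q\not\equiv0\pmod 3$): RC = real chord; Tr = tangent; IC = imaginary chord; RA = real axis; IA = imaginary axis; U$\Gamma$ = unisecant which is not a tangent and is contained in some $\Gamma$-plane; Un$\Gamma$ = unisecant contained in no $\Gamma$-plane; E$\Gamma$ = external line contained in exactly one $\Gamma$-plane; En$\Gamma$ = external line contained in no $\Gamma$-plane that is neither an imaginary chord nor an imaginary axis. For $q=2$: $\mathscr C$ lies in the plane $x_1=x_2$; U$\Gamma_2$-lines are the U$\Gamma$-lines contained in the plane $x_1=x_2$, and U$\Gamma_1$-lines are the remaining U$\Gamma$-lines. *)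

theory Defs
  imports "HOL-Analysis.Analysis" "HOL-Library.Z2"
begin

section \<open>The field with four elements\<close>

text \<open>GF4 = {0, 1, w, w2} with w2 = w + 1, w * w = w2.\<close>

datatype gf4 = G0 | G1 | GW | GW2

fun gf4_add :: "gf4 \<Rightarrow> gf4 \<Rightarrow> gf4" where
  "gf4_add G0 y = y"
| "gf4_add x G0 = x"
| "gf4_add G1 G1 = G0" | "gf4_add G1 GW = GW2" | "gf4_add G1 GW2 = GW"
| "gf4_add GW G1 = GW2" | "gf4_add GW GW = G0" | "gf4_add GW GW2 = G1"
| "gf4_add GW2 G1 = GW" | "gf4_add GW2 GW = G1" | "gf4_add GW2 GW2 = G0"

fun gf4_mul :: "gf4 \<Rightarrow> gf4 \<Rightarrow> gf4" where
  "gf4_mul G0 y = G0"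
| "gf4_mul x G0 = G0"
| "gf4_mul G1 y = y"
| "gf4_mul x G1 = x"
| "gf4_mul GW GW = GW2" | "gf4_mul GW GW2 = G1"
| "gf4_mul GW2 GW = G1" | "gf4_mul GW2 GW2 = GW"

fun gf4_inv :: "gf4 \<Rightarrow> gf4" where
  "gf4_inv G0 = G0" | "gf4_inv G1 = G1" | "gf4_inv GW = GW2" | "gf4_inv GW2 = GW"

instantiation gf4 :: field
begin
definition "0 = G0"
definition "1 = G1"
definition "x + y = gf4_add x y"
definition "x * y = gf4_mul x y"
definition "- x = (x :: gf4)"
definition "x - y = gf4_add x y"
definition "inverse x = gf4_inv x"
definition "x div y = gf4_mul x (gf4_inv y)"
instance
  apply standard
  unfolding zero_gf4_def one_gf4_def plus_gf4_def times_gf4_def uminus_gf4_def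
    minus_gf4_def inverse_gf4_def divide_gf4_def
  subgoal for a b c by (cases a; cases b; cases c; simp)
  subgoal for a b by (cases a; cases b; simp)
  subgoal for a by (cases a; simp)
  subgoal for a b c by (cases a; cases b; cases c; simp)
  subgoal for a b by (cases a; cases b; simp)
  subgoal for a by (cases a; simp)
  subgoal for a by (cases a; simp)
  subgoal for a b by (cases a; cases b; simp)
  subgoal for a b c by (cases a; cases b; cases c; simp)
  subgoal by simp
  subgoal for a by (cases a; simp)
  subgoal for a b by (cases a; cases b; simp)
  subgoal by simp
  done
end

text \<open>The embedding of GF(2) (the library field \<open>bit\<close>) into GF(4).\<close>

definition emb24 :: "bit \<Rightarrow> gf4" where
  "emb24 b = (if b = 0 then 0 else 1)"

definition emb24_vec :: "bit ^ 4 \<Rightarrow> gf4 ^ 4" where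
  "emb24_vec x = (\<chi> i. emb24 (x $ i))"

section \<open>Projective 3-space PG(3,F) over a field F\<close>

definition vec4 :: "'a \<Rightarrow> 'a \<Rightarrow> 'a \<Rightarrow> 'a \<Rightarrow> 'a ^ 4" where
  "vec4 a b c d = (\<chi> i. if i = 0 then a else if i = 1 then b else if i = 2 then c else d)"

definition dot4 :: "'a::comm_ring_1 ^ 4 \<Rightarrow> 'a ^ 4 \<Rightarrow> 'a" where
  "dot4 c x = (\<Sum>i\<in>UNIV. c $ i * x $ i)"

text \<open>A point P(x) of PG(3,F): the class of a nonzero vector up to nonzero scalars.\<close>

definition proj_point :: "'a::field ^ 4 \<Rightarrow> ('a ^ 4) set" where
  "proj_point x = {c *s x | c. c \<noteq> 0}"

definition pg_points :: "('a::field ^ 4) set set" where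
  "pg_points = {proj_point x | x. x \<noteq> 0}"

definition lin_indep2 :: "'a::field ^ 4 \<Rightarrow> 'a ^ 4 \<Rightarrow> bool" where
  "lin_indep2 x y \<longleftrightarrow> (\<forall>a b. a *s x + b *s y = 0 \<longrightarrow> a = 0 \<and> b = 0)"

text \<open>The line through P(x) and P(y) (x, y linearly independent), as a set of points.\<close>

definition line_through :: "'a::field ^ 4 \<Rightarrow> 'a ^ 4 \<Rightarrow> ('a ^ 4) set set" where
  "line_through x y = {proj_point (a *s x + b *s y) | a b. a *s x + b *s y \<noteq> 0}"

definition pg_lines :: "('a::field ^ 4) set set set" where
  "pg_lines = {line_through x y | x y. lin_indep2 x y}"

text \<open>The plane pi(c0,c1,c2,c3), as a set of points.\<close>

definition plane :: "'a::field ^ 4 \<Rightarrow> ('a ^ 4) set set" where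
  "plane c = {proj_point x | x. x \<noteq> 0 \<and> dot4 c x = 0}"

section \<open>The twisted cubic, osculating planes, tangents\<close>

text \<open>Parameters in F^+ = F \<union> {\<infinity>} are modelled by \<open>'a option\<close>, with \<open>None\<close> = \<infinity>.\<close>

fun tc_vec :: "'a::field option \<Rightarrow> 'a ^ 4" where
  "tc_vec (Some t) = vec4 (t ^ 3) (t ^ 2) t 1"
| "tc_vec None = vec4 1 0 0 0"

definition tcubic :: "('a::field ^ 4) set set" where
  "tcubic = {proj_point (tc_vec t) | t. True}"

fun osc_coef :: "'a::field option \<Rightarrow> 'a ^ 4" where
  "osc_coef (Some t) = vec4 1 (- 3 * t) (3 * t ^ 2) (- (t ^ 3))"
| "osc_coef None = vec4 0 0 0 1"

definition gamma_planes :: "('a::field ^ 4) set set set" where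
  "gamma_planes = {plane (osc_coef t) | t. True}"

fun tangent :: "'a::field option \<Rightarrow> ('a ^ 4) set set" where
  "tangent (Some t) = line_through (tc_vec (Some t)) (vec4 (3 * t ^ 2) (2 * t) 1 0)"
| "tangent None = line_through (vec4 1 0 0 0) (vec4 0 1 0 0)"

section \<open>Line types\<close>

definition is_RC :: "('a::field ^ 4) set set \<Rightarrow> bool" where
  "is_RC L \<longleftrightarrow> L \<in> pg_lines \<and>
     (\<exists>P\<in>tcubic. \<exists>Q\<in>tcubic. P \<noteq> Q \<and> P \<in> L \<and> Q \<in> L)"

definition is_Tr :: "('a::field ^ 4) set set \<Rightarrow> bool" where
  "is_Tr L \<longleftrightarrow> (\<exists>t. L = tangent t)"

definition is_RA :: "('a::field ^ 4) set set \<Rightarrow> bool" where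
  "is_RA L \<longleftrightarrow> L \<in> pg_lines \<and>
     (\<exists>\<pi>1\<in>gamma_planes. \<exists>\<pi>2\<in>gamma_planes. \<pi>1 \<noteq> \<pi>2 \<and> L = \<pi>1 \<inter> \<pi>2)"

definition unisecant :: "('a::field ^ 4) set set \<Rightarrow> bool" where
  "unisecant L \<longleftrightarrow> L \<in> pg_lines \<and> card (L \<inter> tcubic) = 1"

definition external_line :: "('a::field ^ 4) set set \<Rightarrow> bool" where
  "external_line L \<longleftrightarrow> L \<in> pg_lines \<and> L \<inter> tcubic = {}"

definition in_gamma_plane :: "('a::field ^ 4) set set \<Rightarrow> bool" where
  "in_gamma_plane L \<longleftrightarrow> (\<exists>\<pi>\<in>gamma_planes. L \<subseteq> \<pi>)"

definition is_UG :: "('a::field ^ 4) set set \<Rightarrow> bool" where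
  "is_UG L \<longleftrightarrow> unisecant L \<and> \<not> is_Tr L \<and> in_gamma_plane L"

definition is_UnG :: "('a::field ^ 4) set set \<Rightarrow> bool" where
  "is_UnG L \<longleftrightarrow> unisecant L \<and> \<not> in_gamma_plane L"

definition is_EG :: "('a::field ^ 4) set set \<Rightarrow> bool" where
  "is_EG L \<longleftrightarrow> external_line L \<and> card {\<pi>\<in>gamma_planes. L \<subseteq> \<pi>} = 1"

text \<open>Imaginary chords and axes, for q = 2, via GF(4) = GF(2^2).  For alpha in
  GF(4) \ GF(2) we have alpha^q = alpha^2.  A line L of PG(3,2) is the line
  corresponding to a line of PG(3,4) defined over GF(2) iff every point of L
  (embedded into PG(3,4)) lies on that line.\<close>

definition span2 :: "'a::field ^ 4 \<Rightarrow> 'a ^ 4 \<Rightarrow> ('a ^ 4) set" where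
  "span2 u v = {a *s u + b *s v | a b. True}"

definition is_IC2 :: "(bit ^ 4) set set \<Rightarrow> bool" where
  "is_IC2 L \<longleftrightarrow> L \<in> pg_lines \<and>
     (\<exists>\<alpha>::gf4. \<alpha> \<notin> range emb24 \<and>
        (\<forall>P\<in>L. \<forall>x\<in>P. emb24_vec x \<in> span2 (tc_vec (Some \<alpha>)) (tc_vec (Some (\<alpha> ^ 2)))))"

definition is_IA2 :: "(bit ^ 4) set set \<Rightarrow> bool" where
  "is_IA2 L \<longleftrightarrow> L \<in> pg_lines \<and>
     (\<exists>\<alpha>::gf4. \<alpha> \<notin> range emb24 \<and>
        (\<forall>P\<in>L. \<forall>x\<in>P. dot4 (osc_coef (Some \<alpha>)) (emb24_vec x) = 0 \<and>
                        dot4 (osc_coef (Some (\<alpha> ^ 2))) (emb24_vec x) = 0))"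

definition is_EnG2 :: "(bit ^ 4) set set \<Rightarrow> bool" where
  "is_EnG2 L \<longleftrightarrow> external_line L \<and> \<not> in_gamma_plane L \<and> \<not> is_IC2 L \<and> \<not> is_IA2 L"

text \<open>For q = 2 the cubic lies in the plane x1 = x2.\<close>

definition plane_x1_x2 :: "('a::field ^ 4) set set" where
  "plane_x1_x2 = plane (vec4 0 1 (-1) 0)"

definition is_UG2 :: "('a::field ^ 4) set set \<Rightarrow> bool" where
  "is_UG2 L \<longleftrightarrow> is_UG L \<and> L \<subseteq> plane_x1_x2"

definition is_UG1 :: "('a::field ^ 4) set set \<Rightarrow> bool" where
  "is_UG1 L \<longleftrightarrow> is_UG L \<and> \<not> L \<subseteq> plane_x1_x2"

section \<open>The group G_q and line orbits\<close>

text \<open>Projectivity induced by an invertible matrix A, acting on points and lines.\<close>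

definition pmap :: "'a::field ^ 4 ^ 4 \<Rightarrow> ('a ^ 4) set \<Rightarrow> ('a ^ 4) set" where
  "pmap A P = (\<lambda>x. A *v x) ` P"

definition lmap :: "'a::field ^ 4 ^ 4 \<Rightarrow> ('a ^ 4) set set \<Rightarrow> ('a ^ 4) set set" where
  "lmap A L = pmap A ` L"

definition Gq :: "('a::field ^ 4 ^ 4) set" where
  "Gq = {A. invertible A \<and> pmap A ` tcubic = tcubic}"

definition line_orbit :: "('a::field ^ 4) set set \<Rightarrow> ('a ^ 4) set set set" where
  "line_orbit L = {lmap A L | A. A \<in> Gq}"

definition line_orbits :: "('a::field ^ 4) set set set set" where
  "line_orbits = line_orbit ` pg_lines"

end

theory Submission
  imports Defs
begin


lemma UNIV4: "(UNIV::4 set) = {0,1,2,3}" using UNIV_4 by auto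
lemma forall4: "(\<forall>i::4. P i) \<longleftrightarrow> P 0 \<and> P 1 \<and> P 2 \<and> P 3"
  by (metis UNIV4 UNIV_I insert_iff empty_iff)
lemma sum4: "sum f (UNIV::4 set) = f 0 + f 1 + f 2 + f 3"
  unfolding UNIV4 by (simp add: ac_simps)

lemma vec4_nth[simp]: "vec4 a b c d $ 0 = a" "vec4 a b c d $ 1 = b" "vec4 a b c d $ 2 = c" "vec4 a b c d $ 3 = d"
  by (simp_all add: vec4_def)

lemma vec4_eta: "(x::'a^4) = vec4 (x$0) (x$1) (x$2) (x$3)"
  by (simp add: vec_eq_iff forall4)
lemma vec4_eq[simp]: "vec4 a b c d = vec4 a' b' c' d' \<longleftrightarrow> a = a' \<and> b = b' \<and> c = c' \<and> d = d'"
  by (auto simp add: vec_eq_iff forall4)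
lemma vec4_add[simp]: "vec4 a b c d + vec4 a' b' c' d' = vec4 (a+a') (b+b') (c+c') (d+d')"
  by (simp add: vec_eq_iff forall4)
lemma vec4_smult[simp]: "k *s vec4 a b c d = vec4 (k*a) (k*b) (k*c) (k*d)"
  by (simp add: vec_eq_iff forall4)
lemma vec4_zero: "(0::'a::zero^4) = vec4 0 0 0 0"
  by (simp add: vec_eq_iff forall4)
lemma dot4_vec4[simp]: "dot4 (vec4 a b c d) (vec4 a' b' c' d') = a*a' + b*b' + c*c' + d*d'"
  by (simp add: dot4_def sum4)
lemma mv_vec4[simp]: "(vec4 r0 r1 r2 r3) *v x = vec4 (dot4 r0 x) (dot4 r1 x) (dot4 r2 x) (dot4 r3 x)"
  by (simp add: vec_eq_iff forall4 matrix_vector_mult_def dot4_def)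

lemma bit_cases: "(b::bit) = 0 \<or> b = 1" by (cases b rule: bit.exhaust) auto

lemma bit_ex: "(\<exists>b::bit. P b) \<longleftrightarrow> P 0 \<or> P 1" using bit_cases by metis
lemma bit_all: "(\<forall>b::bit. P b) \<longleftrightarrow> P 0 \<and> P 1" using bit_cases by metis

lemma vec_all: "(\<forall>x::bit^4. P x) \<longleftrightarrow> (\<forall>a b c d. P (vec4 a b c d))"
  by (metis vec4_eta)
lemma vec_ex: "(\<exists>x::bit^4. P x) \<longleftrightarrow> (\<exists>a b c d. P (vec4 a b c d))"
  by (metis vec4_eta)

lemma bit_neq0: "(c::bit) \<noteq> 0 \<longleftrightarrow> c = 1" by simp

lemma proj_bit: "proj_point (x::bit^4) = {x}"
  unfolding proj_point_def by auto

lemma vec16: "P (vec4 0 0 0 0) \<Longrightarrow> P (vec4 0 0 0 1) \<Longrightarrow> P (vec4 0 0 1 0) \<Longrightarrow> P (vec4 0 0 1 1) \<Longrightarrow> P (vec4 0 1 0 0) \<Longrightarrow> P (vec4 0 1 0 1) \<Longrightarrow> P (vec4 0 1 1 0) \<Longrightarrow> P (vec4 0 1 1 1) \<Longrightarrow> P (vec4 1 0 0 0) \<Longrightarrow> P (vec4 1 0 0 1) \<Longrightarrow> P (vec4 1 0 1 0) \<Longrightarrow> P (vec4 1 0 1 1) \<Longrightarrow> P (vec4 1 1 0 0) \<Longrightarrow> P (vec4 1 1 0 1) \<Longrightarrow> P (vec4 1 1 1 0) \<Longrightarrow> P (vec4 1 1 1 1) \<Longrightarrow> P (y::bit^4)"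
proof -
  assume h: "P (vec4 0 0 0 0)" "P (vec4 0 0 0 1)" "P (vec4 0 0 1 0)" "P (vec4 0 0 1 1)" "P (vec4 0 1 0 0)" "P (vec4 0 1 0 1)" "P (vec4 0 1 1 0)" "P (vec4 0 1 1 1)" "P (vec4 1 0 0 0)" "P (vec4 1 0 0 1)" "P (vec4 1 0 1 0)" "P (vec4 1 0 1 1)" "P (vec4 1 1 0 0)" "P (vec4 1 1 0 1)" "P (vec4 1 1 1 0)" "P (vec4 1 1 1 1)"
  have "y = vec4 (y$0) (y$1) (y$2) (y$3)" by (rule vec4_eta)
  then show ?thesis using h bit_cases[of "y$0"] bit_cases[of "y$1"] bit_cases[of "y$2"] bit_cases[of "y$3"]
    by (smt (verit))
qed

lemma bit_add_eq0: "(a::bit) + b = 0 \<longleftrightarrow> a = b"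
  using bit_cases[of a] bit_cases[of b] by auto
lemma vadd_eq0: "(x::bit^4) + y = 0 \<longleftrightarrow> x = y"
  unfolding vec_eq_iff by (simp only: vector_add_component zero_index bit_add_eq0)
lemma vadd_self[simp]: "(x::bit^4) + x = 0"
  by (metis vadd_eq0)
lemma vadd_self2[simp]: "(x::bit^4) + (x + y) = y" "(x::bit^4) + (y + x) = y"
  "(y + x) + (x::bit^4) = y" "(x + y) + (x::bit^4) = y"
  by (simp_all add: add.assoc[symmetric] add.commute add.left_commute)

definition sng :: "'a set \<Rightarrow> 'a set set" where "sng V = (\<lambda>v. {v}) ` V"

lemma sng_mem[simp]: "{v} \<in> sng V \<longleftrightarrow> v \<in> V" by (auto simp: sng_def)
lemma sng_eq[simp]: "sng V = sng W \<longleftrightarrow> V = W" by (auto simp: sng_def)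
lemma sng_sub[simp]: "sng V \<subseteq> sng W \<longleftrightarrow> V \<subseteq> W" by (auto simp: sng_def)
lemma sng_int: "sng V \<inter> sng W = sng (V \<inter> W)" by (auto simp: sng_def)
lemma sng_empty_iff[simp]: "sng V = {} \<longleftrightarrow> V = {}" by (auto simp: sng_def)
lemma card_sng[simp]: "card (sng V) = card V"
  unfolding sng_def by (rule card_image) (auto simp: inj_on_def)
lemma inj_sng: "inj sng" by (auto simp: inj_def)
lemma ball_sng: "(\<forall>P\<in>sng V. Q P) \<longleftrightarrow> (\<forall>v\<in>V. Q {v})" by (auto simp: sng_def)
lemma bex_sng: "(\<exists>P\<in>sng V. Q P) \<longleftrightarrow> (\<exists>v\<in>V. Q {v})" by (auto simp: sng_def)

lemma lin_indep2_bit: "lin_indep2 (x::bit^4) y \<longleftrightarrow> x \<noteq> 0 \<and> y \<noteq> 0 \<and> x \<noteq> y"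
  unfolding lin_indep2_def bit_all by (auto simp: vadd_eq0)

lemma line_bit: "lin_indep2 (x::bit^4) y \<Longrightarrow> line_through x y = sng {x, y, x + y}"
  unfolding line_through_def sng_def proj_bit lin_indep2_bit
  by (auto simp: bit_ex vadd_eq0 eq_commute[of "x + y" 0])

lemma pg_lines_bit: "(pg_lines :: (bit^4) set set set) = {sng {x, y, x + y} | x y. x \<noteq> 0 \<and> y \<noteq> 0 \<and> x \<noteq> y}"
  unfolding pg_lines_def
proof (intro set_eqI iffI)
  fix L :: "(bit^4) set set"
  assume "L \<in> {line_through x y |x y. lin_indep2 x y}"
  then obtain x y where h: "L = line_through x y" "lin_indep2 x y" by blast
  then have "L = sng {x,y,x+y}" "x \<noteq> 0" "y \<noteq> 0" "x \<noteq> y" using line_bit lin_indep2_bit by auto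
  then show "L \<in> {sng {x, y, x + y} | x y. x \<noteq> 0 \<and> y \<noteq> 0 \<and> x \<noteq> y}" by blast
next
  fix L :: "(bit^4) set set"
  assume "L \<in> {sng {x, y, x + y} | x y. x \<noteq> 0 \<and> y \<noteq> 0 \<and> x \<noteq> y}"
  then obtain x y where h: "L = sng {x,y,x+y}" "x \<noteq> 0" "y \<noteq> 0" "x \<noteq> y" by blast
  then have "lin_indep2 x y" "L = line_through x y" using line_bit lin_indep2_bit by auto
  then show "L \<in> {line_through x y |x y. lin_indep2 x y}" by blast
qed

lemma in_pg: "(x::bit^4) \<noteq> 0 \<Longrightarrow> y \<noteq> 0 \<Longrightarrow> x \<noteq> y \<Longrightarrow> sng {x, y, x + y} \<in> pg_lines"
  unfolding pg_lines_bit by blast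

lemma tri: "(x::bit^4) \<in> {a, b, a + b} \<Longrightarrow> y \<in> {a, b, a + b} \<Longrightarrow> x \<noteq> y \<Longrightarrow> {a, b, a + b} = {x, y, x + y}"
  by (elim insertE emptyE; simp add: insert_commute add.commute)
definition "ln0 = ({vec4 0 0 0 1, vec4 0 0 1 0, vec4 0 0 1 1} :: (bit^4) set)"
definition "ln1 = ({vec4 0 0 0 1, vec4 0 1 0 0, vec4 0 1 0 1} :: (bit^4) set)"
definition "ln2 = ({vec4 0 0 0 1, vec4 0 1 1 0, vec4 0 1 1 1} :: (bit^4) set)"
definition "ln3 = ({vec4 0 0 0 1, vec4 1 0 0 0, vec4 1 0 0 1} :: (bit^4) set)"
definition "ln4 = ({vec4 0 0 0 1, vec4 1 0 1 0, vec4 1 0 1 1} :: (bit^4) set)"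
definition "ln5 = ({vec4 0 0 0 1, vec4 1 1 0 0, vec4 1 1 0 1} :: (bit^4) set)"
definition "ln6 = ({vec4 0 0 0 1, vec4 1 1 1 0, vec4 1 1 1 1} :: (bit^4) set)"
definition "ln7 = ({vec4 0 0 1 0, vec4 0 1 0 0, vec4 0 1 1 0} :: (bit^4) set)"
definition "ln8 = ({vec4 0 0 1 0, vec4 0 1 0 1, vec4 0 1 1 1} :: (bit^4) set)"
definition "ln9 = ({vec4 0 0 1 0, vec4 1 0 0 0, vec4 1 0 1 0} :: (bit^4) set)"
definition "ln10 = ({vec4 0 0 1 0, vec4 1 0 0 1, vec4 1 0 1 1} :: (bit^4) set)"
definition "ln11 = ({vec4 0 0 1 0, vec4 1 1 0 0, vec4 1 1 1 0} :: (bit^4) set)"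
definition "ln12 = ({vec4 0 0 1 0, vec4 1 1 0 1, vec4 1 1 1 1} :: (bit^4) set)"
definition "ln13 = ({vec4 0 0 1 1, vec4 0 1 0 0, vec4 0 1 1 1} :: (bit^4) set)"
definition "ln14 = ({vec4 0 0 1 1, vec4 0 1 0 1, vec4 0 1 1 0} :: (bit^4) set)"
definition "ln15 = ({vec4 0 0 1 1, vec4 1 0 0 0, vec4 1 0 1 1} :: (bit^4) set)"
definition "ln16 = ({vec4 0 0 1 1, vec4 1 0 0 1, vec4 1 0 1 0} :: (bit^4) set)"
definition "ln17 = ({vec4 0 0 1 1, vec4 1 1 0 0, vec4 1 1 1 1} :: (bit^4) set)"
definition "ln18 = ({vec4 0 0 1 1, vec4 1 1 0 1, vec4 1 1 1 0} :: (bit^4) set)"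
definition "ln19 = ({vec4 0 1 0 0, vec4 1 0 0 0, vec4 1 1 0 0} :: (bit^4) set)"
definition "ln20 = ({vec4 0 1 0 0, vec4 1 0 0 1, vec4 1 1 0 1} :: (bit^4) set)"
definition "ln21 = ({vec4 0 1 0 0, vec4 1 0 1 0, vec4 1 1 1 0} :: (bit^4) set)"
definition "ln22 = ({vec4 0 1 0 0, vec4 1 0 1 1, vec4 1 1 1 1} :: (bit^4) set)"
definition "ln23 = ({vec4 0 1 0 1, vec4 1 0 0 0, vec4 1 1 0 1} :: (bit^4) set)"
definition "ln24 = ({vec4 0 1 0 1, vec4 1 0 0 1, vec4 1 1 0 0} :: (bit^4) set)"
definition "ln25 = ({vec4 0 1 0 1, vec4 1 0 1 0, vec4 1 1 1 1} :: (bit^4) set)"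
definition "ln26 = ({vec4 0 1 0 1, vec4 1 0 1 1, vec4 1 1 1 0} :: (bit^4) set)"
definition "ln27 = ({vec4 0 1 1 0, vec4 1 0 0 0, vec4 1 1 1 0} :: (bit^4) set)"
definition "ln28 = ({vec4 0 1 1 0, vec4 1 0 0 1, vec4 1 1 1 1} :: (bit^4) set)"
definition "ln29 = ({vec4 0 1 1 0, vec4 1 0 1 0, vec4 1 1 0 0} :: (bit^4) set)"
definition "ln30 = ({vec4 0 1 1 0, vec4 1 0 1 1, vec4 1 1 0 1} :: (bit^4) set)"
definition "ln31 = ({vec4 0 1 1 1, vec4 1 0 0 0, vec4 1 1 1 1} :: (bit^4) set)"
definition "ln32 = ({vec4 0 1 1 1, vec4 1 0 0 1, vec4 1 1 1 0} :: (bit^4) set)"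
definition "ln33 = ({vec4 0 1 1 1, vec4 1 0 1 0, vec4 1 1 0 1} :: (bit^4) set)"
definition "ln34 = ({vec4 0 1 1 1, vec4 1 0 1 1, vec4 1 1 0 0} :: (bit^4) set)"
lemmas ln_defs = ln0_def ln1_def ln2_def ln3_def ln4_def ln5_def ln6_def ln7_def ln8_def ln9_def ln10_def ln11_def ln12_def ln13_def ln14_def ln15_def ln16_def ln17_def ln18_def ln19_def ln20_def ln21_def ln22_def ln23_def ln24_def ln25_def ln26_def ln27_def ln28_def ln29_def ln30_def ln31_def ln32_def ln33_def ln34_def
definition "LV35 = [ln0, ln1, ln2, ln3, ln4, ln5, ln6, ln7, ln8, ln9, ln10, ln11, ln12, ln13, ln14, ln15, ln16, ln17, ln18, ln19, ln20, ln21, ln22, ln23, ln24, ln25, ln26, ln27, ln28, ln29, ln30, ln31, ln32, ln33, ln34]"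
lemma in_lv: "ln0 \<in> set LV35" "ln1 \<in> set LV35" "ln2 \<in> set LV35" "ln3 \<in> set LV35" "ln4 \<in> set LV35" "ln5 \<in> set LV35" "ln6 \<in> set LV35" "ln7 \<in> set LV35" "ln8 \<in> set LV35" "ln9 \<in> set LV35" "ln10 \<in> set LV35" "ln11 \<in> set LV35" "ln12 \<in> set LV35" "ln13 \<in> set LV35" "ln14 \<in> set LV35" "ln15 \<in> set LV35" "ln16 \<in> set LV35" "ln17 \<in> set LV35" "ln18 \<in> set LV35" "ln19 \<in> set LV35" "ln20 \<in> set LV35" "ln21 \<in> set LV35" "ln22 \<in> set LV35" "ln23 \<in> set LV35" "ln24 \<in> set LV35" "ln25 \<in> set LV35" "ln26 \<in> set LV35" "ln27 \<in> set LV35" "ln28 \<in> set LV35" "ln29 \<in> set LV35" "ln30 \<in> set LV35" "ln31 \<in> set LV35" "ln32 \<in> set LV35" "ln33 \<in> set LV35" "ln34 \<in> set LV35"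
  by (simp_all add: LV35_def)
lemma cov0: "y \<noteq> 0 \<longrightarrow> y \<noteq> vec4 0 0 0 1 \<longrightarrow> ((vec4 0 0 0 1 \<in> ln0 \<and> y \<in> ln0) \<or> (vec4 0 0 0 1 \<in> ln1 \<and> y \<in> ln1) \<or> (vec4 0 0 0 1 \<in> ln2 \<and> y \<in> ln2) \<or> (vec4 0 0 0 1 \<in> ln3 \<and> y \<in> ln3) \<or> (vec4 0 0 0 1 \<in> ln4 \<and> y \<in> ln4) \<or> (vec4 0 0 0 1 \<in> ln5 \<and> y \<in> ln5) \<or> (vec4 0 0 0 1 \<in> ln6 \<and> y \<in> ln6))"
  by (rule vec16[of _ y]) (simp_all add: ln_defs vec4_zero)
lemma covx0: "vec4 0 0 0 1 \<noteq> 0 \<longrightarrow> y \<noteq> 0 \<longrightarrow> vec4 0 0 0 1 \<noteq> y \<longrightarrow> (\<exists>V\<in>set LV35. vec4 0 0 0 1 \<in> V \<and> y \<in> V)"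
  using cov0[of y] in_lv(1) in_lv(2) in_lv(3) in_lv(4) in_lv(5) in_lv(6) in_lv(7) by blast
lemma cov1: "y \<noteq> 0 \<longrightarrow> y \<noteq> vec4 0 0 1 0 \<longrightarrow> ((vec4 0 0 1 0 \<in> ln0 \<and> y \<in> ln0) \<or> (vec4 0 0 1 0 \<in> ln7 \<and> y \<in> ln7) \<or> (vec4 0 0 1 0 \<in> ln8 \<and> y \<in> ln8) \<or> (vec4 0 0 1 0 \<in> ln9 \<and> y \<in> ln9) \<or> (vec4 0 0 1 0 \<in> ln10 \<and> y \<in> ln10) \<or> (vec4 0 0 1 0 \<in> ln11 \<and> y \<in> ln11) \<or> (vec4 0 0 1 0 \<in> ln12 \<and> y \<in> ln12))"
  by (rule vec16[of _ y]) (simp_all add: ln_defs vec4_zero)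
lemma covx1: "vec4 0 0 1 0 \<noteq> 0 \<longrightarrow> y \<noteq> 0 \<longrightarrow> vec4 0 0 1 0 \<noteq> y \<longrightarrow> (\<exists>V\<in>set LV35. vec4 0 0 1 0 \<in> V \<and> y \<in> V)"
  using cov1[of y] in_lv(1) in_lv(8) in_lv(9) in_lv(10) in_lv(11) in_lv(12) in_lv(13) by blast
lemma cov2: "y \<noteq> 0 \<longrightarrow> y \<noteq> vec4 0 0 1 1 \<longrightarrow> ((vec4 0 0 1 1 \<in> ln0 \<and> y \<in> ln0) \<or> (vec4 0 0 1 1 \<in> ln13 \<and> y \<in> ln13) \<or> (vec4 0 0 1 1 \<in> ln14 \<and> y \<in> ln14) \<or> (vec4 0 0 1 1 \<in> ln15 \<and> y \<in> ln15) \<or> (vec4 0 0 1 1 \<in> ln16 \<and> y \<in> ln16) \<or> (vec4 0 0 1 1 \<in> ln17 \<and> y \<in> ln17) \<or> (vec4 0 0 1 1 \<in> ln18 \<and> y \<in> ln18))"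
  by (rule vec16[of _ y]) (simp_all add: ln_defs vec4_zero)
lemma covx2: "vec4 0 0 1 1 \<noteq> 0 \<longrightarrow> y \<noteq> 0 \<longrightarrow> vec4 0 0 1 1 \<noteq> y \<longrightarrow> (\<exists>V\<in>set LV35. vec4 0 0 1 1 \<in> V \<and> y \<in> V)"
  using cov2[of y] in_lv(1) in_lv(14) in_lv(15) in_lv(16) in_lv(17) in_lv(18) in_lv(19) by blast
lemma cov3: "y \<noteq> 0 \<longrightarrow> y \<noteq> vec4 0 1 0 0 \<longrightarrow> ((vec4 0 1 0 0 \<in> ln1 \<and> y \<in> ln1) \<or> (vec4 0 1 0 0 \<in> ln7 \<and> y \<in> ln7) \<or> (vec4 0 1 0 0 \<in> ln13 \<and> y \<in> ln13) \<or> (vec4 0 1 0 0 \<in> ln19 \<and> y \<in> ln19) \<or> (vec4 0 1 0 0 \<in> ln20 \<and> y \<in> ln20) \<or> (vec4 0 1 0 0 \<in> ln21 \<and> y \<in> ln21) \<or> (vec4 0 1 0 0 \<in> ln22 \<and> y \<in> ln22))"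
  by (rule vec16[of _ y]) (simp_all add: ln_defs vec4_zero)
lemma covx3: "vec4 0 1 0 0 \<noteq> 0 \<longrightarrow> y \<noteq> 0 \<longrightarrow> vec4 0 1 0 0 \<noteq> y \<longrightarrow> (\<exists>V\<in>set LV35. vec4 0 1 0 0 \<in> V \<and> y \<in> V)"
  using cov3[of y] in_lv(2) in_lv(8) in_lv(14) in_lv(20) in_lv(21) in_lv(22) in_lv(23) by blast
lemma cov4: "y \<noteq> 0 \<longrightarrow> y \<noteq> vec4 0 1 0 1 \<longrightarrow> ((vec4 0 1 0 1 \<in> ln1 \<and> y \<in> ln1) \<or> (vec4 0 1 0 1 \<in> ln8 \<and> y \<in> ln8) \<or> (vec4 0 1 0 1 \<in> ln14 \<and> y \<in> ln14) \<or> (vec4 0 1 0 1 \<in> ln23 \<and> y \<in> ln23) \<or> (vec4 0 1 0 1 \<in> ln24 \<and> y \<in> ln24) \<or> (vec4 0 1 0 1 \<in> ln25 \<and> y \<in> ln25) \<or> (vec4 0 1 0 1 \<in> ln26 \<and> y \<in> ln26))"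
  by (rule vec16[of _ y]) (simp_all add: ln_defs vec4_zero)
lemma covx4: "vec4 0 1 0 1 \<noteq> 0 \<longrightarrow> y \<noteq> 0 \<longrightarrow> vec4 0 1 0 1 \<noteq> y \<longrightarrow> (\<exists>V\<in>set LV35. vec4 0 1 0 1 \<in> V \<and> y \<in> V)"
  using cov4[of y] in_lv(2) in_lv(9) in_lv(15) in_lv(24) in_lv(25) in_lv(26) in_lv(27) by blast
lemma cov5: "y \<noteq> 0 \<longrightarrow> y \<noteq> vec4 0 1 1 0 \<longrightarrow> ((vec4 0 1 1 0 \<in> ln2 \<and> y \<in> ln2) \<or> (vec4 0 1 1 0 \<in> ln7 \<and> y \<in> ln7) \<or> (vec4 0 1 1 0 \<in> ln14 \<and> y \<in> ln14) \<or> (vec4 0 1 1 0 \<in> ln27 \<and> y \<in> ln27) \<or> (vec4 0 1 1 0 \<in> ln28 \<and> y \<in> ln28) \<or> (vec4 0 1 1 0 \<in> ln29 \<and> y \<in> ln29) \<or> (vec4 0 1 1 0 \<in> ln30 \<and> y \<in> ln30))"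
  by (rule vec16[of _ y]) (simp_all add: ln_defs vec4_zero)
lemma covx5: "vec4 0 1 1 0 \<noteq> 0 \<longrightarrow> y \<noteq> 0 \<longrightarrow> vec4 0 1 1 0 \<noteq> y \<longrightarrow> (\<exists>V\<in>set LV35. vec4 0 1 1 0 \<in> V \<and> y \<in> V)"
  using cov5[of y] in_lv(3) in_lv(8) in_lv(15) in_lv(28) in_lv(29) in_lv(30) in_lv(31) by blast
lemma cov6: "y \<noteq> 0 \<longrightarrow> y \<noteq> vec4 0 1 1 1 \<longrightarrow> ((vec4 0 1 1 1 \<in> ln2 \<and> y \<in> ln2) \<or> (vec4 0 1 1 1 \<in> ln8 \<and> y \<in> ln8) \<or> (vec4 0 1 1 1 \<in> ln13 \<and> y \<in> ln13) \<or> (vec4 0 1 1 1 \<in> ln31 \<and> y \<in> ln31) \<or> (vec4 0 1 1 1 \<in> ln32 \<and> y \<in> ln32) \<or> (vec4 0 1 1 1 \<in> ln33 \<and> y \<in> ln33) \<or> (vec4 0 1 1 1 \<in> ln34 \<and> y \<in> ln34))"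
  by (rule vec16[of _ y]) (simp_all add: ln_defs vec4_zero)
lemma covx6: "vec4 0 1 1 1 \<noteq> 0 \<longrightarrow> y \<noteq> 0 \<longrightarrow> vec4 0 1 1 1 \<noteq> y \<longrightarrow> (\<exists>V\<in>set LV35. vec4 0 1 1 1 \<in> V \<and> y \<in> V)"
  using cov6[of y] in_lv(3) in_lv(9) in_lv(14) in_lv(32) in_lv(33) in_lv(34) in_lv(35) by blast
lemma cov7: "y \<noteq> 0 \<longrightarrow> y \<noteq> vec4 1 0 0 0 \<longrightarrow> ((vec4 1 0 0 0 \<in> ln3 \<and> y \<in> ln3) \<or> (vec4 1 0 0 0 \<in> ln9 \<and> y \<in> ln9) \<or> (vec4 1 0 0 0 \<in> ln15 \<and> y \<in> ln15) \<or> (vec4 1 0 0 0 \<in> ln19 \<and> y \<in> ln19) \<or> (vec4 1 0 0 0 \<in> ln23 \<and> y \<in> ln23) \<or> (vec4 1 0 0 0 \<in> ln27 \<and> y \<in> ln27) \<or> (vec4 1 0 0 0 \<in> ln31 \<and> y \<in> ln31))"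
  by (rule vec16[of _ y]) (simp_all add: ln_defs vec4_zero)
lemma covx7: "vec4 1 0 0 0 \<noteq> 0 \<longrightarrow> y \<noteq> 0 \<longrightarrow> vec4 1 0 0 0 \<noteq> y \<longrightarrow> (\<exists>V\<in>set LV35. vec4 1 0 0 0 \<in> V \<and> y \<in> V)"
  using cov7[of y] in_lv(4) in_lv(10) in_lv(16) in_lv(20) in_lv(24) in_lv(28) in_lv(32) by blast
lemma cov8: "y \<noteq> 0 \<longrightarrow> y \<noteq> vec4 1 0 0 1 \<longrightarrow> ((vec4 1 0 0 1 \<in> ln3 \<and> y \<in> ln3) \<or> (vec4 1 0 0 1 \<in> ln10 \<and> y \<in> ln10) \<or> (vec4 1 0 0 1 \<in> ln16 \<and> y \<in> ln16) \<or> (vec4 1 0 0 1 \<in> ln20 \<and> y \<in> ln20) \<or> (vec4 1 0 0 1 \<in> ln24 \<and> y \<in> ln24) \<or> (vec4 1 0 0 1 \<in> ln28 \<and> y \<in> ln28) \<or> (vec4 1 0 0 1 \<in> ln32 \<and> y \<in> ln32))"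
  by (rule vec16[of _ y]) (simp_all add: ln_defs vec4_zero)
lemma covx8: "vec4 1 0 0 1 \<noteq> 0 \<longrightarrow> y \<noteq> 0 \<longrightarrow> vec4 1 0 0 1 \<noteq> y \<longrightarrow> (\<exists>V\<in>set LV35. vec4 1 0 0 1 \<in> V \<and> y \<in> V)"
  using cov8[of y] in_lv(4) in_lv(11) in_lv(17) in_lv(21) in_lv(25) in_lv(29) in_lv(33) by blast
lemma cov9: "y \<noteq> 0 \<longrightarrow> y \<noteq> vec4 1 0 1 0 \<longrightarrow> ((vec4 1 0 1 0 \<in> ln4 \<and> y \<in> ln4) \<or> (vec4 1 0 1 0 \<in> ln9 \<and> y \<in> ln9) \<or> (vec4 1 0 1 0 \<in> ln16 \<and> y \<in> ln16) \<or> (vec4 1 0 1 0 \<in> ln21 \<and> y \<in> ln21) \<or> (vec4 1 0 1 0 \<in> ln25 \<and> y \<in> ln25) \<or> (vec4 1 0 1 0 \<in> ln29 \<and> y \<in> ln29) \<or> (vec4 1 0 1 0 \<in> ln33 \<and> y \<in> ln33))"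
  by (rule vec16[of _ y]) (simp_all add: ln_defs vec4_zero)
lemma covx9: "vec4 1 0 1 0 \<noteq> 0 \<longrightarrow> y \<noteq> 0 \<longrightarrow> vec4 1 0 1 0 \<noteq> y \<longrightarrow> (\<exists>V\<in>set LV35. vec4 1 0 1 0 \<in> V \<and> y \<in> V)"
  using cov9[of y] in_lv(5) in_lv(10) in_lv(17) in_lv(22) in_lv(26) in_lv(30) in_lv(34) by blast
lemma cov10: "y \<noteq> 0 \<longrightarrow> y \<noteq> vec4 1 0 1 1 \<longrightarrow> ((vec4 1 0 1 1 \<in> ln4 \<and> y \<in> ln4) \<or> (vec4 1 0 1 1 \<in> ln10 \<and> y \<in> ln10) \<or> (vec4 1 0 1 1 \<in> ln15 \<and> y \<in> ln15) \<or> (vec4 1 0 1 1 \<in> ln22 \<and> y \<in> ln22) \<or> (vec4 1 0 1 1 \<in> ln26 \<and> y \<in> ln26) \<or> (vec4 1 0 1 1 \<in> ln30 \<and> y \<in> ln30) \<or> (vec4 1 0 1 1 \<in> ln34 \<and> y \<in> ln34))"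
  by (rule vec16[of _ y]) (simp_all add: ln_defs vec4_zero)
lemma covx10: "vec4 1 0 1 1 \<noteq> 0 \<longrightarrow> y \<noteq> 0 \<longrightarrow> vec4 1 0 1 1 \<noteq> y \<longrightarrow> (\<exists>V\<in>set LV35. vec4 1 0 1 1 \<in> V \<and> y \<in> V)"
  using cov10[of y] in_lv(5) in_lv(11) in_lv(16) in_lv(23) in_lv(27) in_lv(31) in_lv(35) by blast
lemma cov11: "y \<noteq> 0 \<longrightarrow> y \<noteq> vec4 1 1 0 0 \<longrightarrow> ((vec4 1 1 0 0 \<in> ln5 \<and> y \<in> ln5) \<or> (vec4 1 1 0 0 \<in> ln11 \<and> y \<in> ln11) \<or> (vec4 1 1 0 0 \<in> ln17 \<and> y \<in> ln17) \<or> (vec4 1 1 0 0 \<in> ln19 \<and> y \<in> ln19) \<or> (vec4 1 1 0 0 \<in> ln24 \<and> y \<in> ln24) \<or> (vec4 1 1 0 0 \<in> ln29 \<and> y \<in> ln29) \<or> (vec4 1 1 0 0 \<in> ln34 \<and> y \<in> ln34))"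
  by (rule vec16[of _ y]) (simp_all add: ln_defs vec4_zero)
lemma covx11: "vec4 1 1 0 0 \<noteq> 0 \<longrightarrow> y \<noteq> 0 \<longrightarrow> vec4 1 1 0 0 \<noteq> y \<longrightarrow> (\<exists>V\<in>set LV35. vec4 1 1 0 0 \<in> V \<and> y \<in> V)"
  using cov11[of y] in_lv(6) in_lv(12) in_lv(18) in_lv(20) in_lv(25) in_lv(30) in_lv(35) by blast
lemma cov12: "y \<noteq> 0 \<longrightarrow> y \<noteq> vec4 1 1 0 1 \<longrightarrow> ((vec4 1 1 0 1 \<in> ln5 \<and> y \<in> ln5) \<or> (vec4 1 1 0 1 \<in> ln12 \<and> y \<in> ln12) \<or> (vec4 1 1 0 1 \<in> ln18 \<and> y \<in> ln18) \<or> (vec4 1 1 0 1 \<in> ln20 \<and> y \<in> ln20) \<or> (vec4 1 1 0 1 \<in> ln23 \<and> y \<in> ln23) \<or> (vec4 1 1 0 1 \<in> ln30 \<and> y \<in> ln30) \<or> (vec4 1 1 0 1 \<in> ln33 \<and> y \<in> ln33))"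
  by (rule vec16[of _ y]) (simp_all add: ln_defs vec4_zero)
lemma covx12: "vec4 1 1 0 1 \<noteq> 0 \<longrightarrow> y \<noteq> 0 \<longrightarrow> vec4 1 1 0 1 \<noteq> y \<longrightarrow> (\<exists>V\<in>set LV35. vec4 1 1 0 1 \<in> V \<and> y \<in> V)"
  using cov12[of y] in_lv(6) in_lv(13) in_lv(19) in_lv(21) in_lv(24) in_lv(31) in_lv(34) by blast
lemma cov13: "y \<noteq> 0 \<longrightarrow> y \<noteq> vec4 1 1 1 0 \<longrightarrow> ((vec4 1 1 1 0 \<in> ln6 \<and> y \<in> ln6) \<or> (vec4 1 1 1 0 \<in> ln11 \<and> y \<in> ln11) \<or> (vec4 1 1 1 0 \<in> ln18 \<and> y \<in> ln18) \<or> (vec4 1 1 1 0 \<in> ln21 \<and> y \<in> ln21) \<or> (vec4 1 1 1 0 \<in> ln26 \<and> y \<in> ln26) \<or> (vec4 1 1 1 0 \<in> ln27 \<and> y \<in> ln27) \<or> (vec4 1 1 1 0 \<in> ln32 \<and> y \<in> ln32))"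
  by (rule vec16[of _ y]) (simp_all add: ln_defs vec4_zero)
lemma covx13: "vec4 1 1 1 0 \<noteq> 0 \<longrightarrow> y \<noteq> 0 \<longrightarrow> vec4 1 1 1 0 \<noteq> y \<longrightarrow> (\<exists>V\<in>set LV35. vec4 1 1 1 0 \<in> V \<and> y \<in> V)"
  using cov13[of y] in_lv(7) in_lv(12) in_lv(19) in_lv(22) in_lv(27) in_lv(28) in_lv(33) by blast
lemma cov14: "y \<noteq> 0 \<longrightarrow> y \<noteq> vec4 1 1 1 1 \<longrightarrow> ((vec4 1 1 1 1 \<in> ln6 \<and> y \<in> ln6) \<or> (vec4 1 1 1 1 \<in> ln12 \<and> y \<in> ln12) \<or> (vec4 1 1 1 1 \<in> ln17 \<and> y \<in> ln17) \<or> (vec4 1 1 1 1 \<in> ln22 \<and> y \<in> ln22) \<or> (vec4 1 1 1 1 \<in> ln25 \<and> y \<in> ln25) \<or> (vec4 1 1 1 1 \<in> ln28 \<and> y \<in> ln28) \<or> (vec4 1 1 1 1 \<in> ln31 \<and> y \<in> ln31))"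
  by (rule vec16[of _ y]) (simp_all add: ln_defs vec4_zero)
lemma covx14: "vec4 1 1 1 1 \<noteq> 0 \<longrightarrow> y \<noteq> 0 \<longrightarrow> vec4 1 1 1 1 \<noteq> y \<longrightarrow> (\<exists>V\<in>set LV35. vec4 1 1 1 1 \<in> V \<and> y \<in> V)"
  using cov14[of y] in_lv(7) in_lv(13) in_lv(18) in_lv(23) in_lv(26) in_lv(29) in_lv(32) by blast
lemma enum_sub: "x \<noteq> 0 \<longrightarrow> y \<noteq> 0 \<longrightarrow> x \<noteq> y \<longrightarrow> (\<exists>V\<in>set LV35. x \<in> V \<and> y \<in> V)"
  apply (rule vec16[of _ x])
  apply (simp add: vec4_zero)
  apply (rule covx0)
  apply (rule covx1)
  apply (rule covx2)
  apply (rule covx3)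
  apply (rule covx4)
  apply (rule covx5)
  apply (rule covx6)
  apply (rule covx7)
  apply (rule covx8)
  apply (rule covx9)
  apply (rule covx10)
  apply (rule covx11)
  apply (rule covx12)
  apply (rule covx13)
  apply (rule covx14)
  done
lemma lv_form0: "\<exists>a b. a \<noteq> 0 \<and> b \<noteq> 0 \<and> a \<noteq> b \<and> ln0 = {a, b, a + b}"
  by (rule exI[of _ "vec4 0 0 0 1"], rule exI[of _ "vec4 0 0 1 0"]) (simp add: ln0_def vec4_zero)
lemma lv_form1: "\<exists>a b. a \<noteq> 0 \<and> b \<noteq> 0 \<and> a \<noteq> b \<and> ln1 = {a, b, a + b}"
  by (rule exI[of _ "vec4 0 0 0 1"], rule exI[of _ "vec4 0 1 0 0"]) (simp add: ln1_def vec4_zero)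
lemma lv_form2: "\<exists>a b. a \<noteq> 0 \<and> b \<noteq> 0 \<and> a \<noteq> b \<and> ln2 = {a, b, a + b}"
  by (rule exI[of _ "vec4 0 0 0 1"], rule exI[of _ "vec4 0 1 1 0"]) (simp add: ln2_def vec4_zero)
lemma lv_form3: "\<exists>a b. a \<noteq> 0 \<and> b \<noteq> 0 \<and> a \<noteq> b \<and> ln3 = {a, b, a + b}"
  by (rule exI[of _ "vec4 0 0 0 1"], rule exI[of _ "vec4 1 0 0 0"]) (simp add: ln3_def vec4_zero)
lemma lv_form4: "\<exists>a b. a \<noteq> 0 \<and> b \<noteq> 0 \<and> a \<noteq> b \<and> ln4 = {a, b, a + b}"
  by (rule exI[of _ "vec4 0 0 0 1"], rule exI[of _ "vec4 1 0 1 0"]) (simp add: ln4_def vec4_zero)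
lemma lv_form5: "\<exists>a b. a \<noteq> 0 \<and> b \<noteq> 0 \<and> a \<noteq> b \<and> ln5 = {a, b, a + b}"
  by (rule exI[of _ "vec4 0 0 0 1"], rule exI[of _ "vec4 1 1 0 0"]) (simp add: ln5_def vec4_zero)
lemma lv_form6: "\<exists>a b. a \<noteq> 0 \<and> b \<noteq> 0 \<and> a \<noteq> b \<and> ln6 = {a, b, a + b}"
  by (rule exI[of _ "vec4 0 0 0 1"], rule exI[of _ "vec4 1 1 1 0"]) (simp add: ln6_def vec4_zero)
lemma lv_form7: "\<exists>a b. a \<noteq> 0 \<and> b \<noteq> 0 \<and> a \<noteq> b \<and> ln7 = {a, b, a + b}"
  by (rule exI[of _ "vec4 0 0 1 0"], rule exI[of _ "vec4 0 1 0 0"]) (simp add: ln7_def vec4_zero)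
lemma lv_form8: "\<exists>a b. a \<noteq> 0 \<and> b \<noteq> 0 \<and> a \<noteq> b \<and> ln8 = {a, b, a + b}"
  by (rule exI[of _ "vec4 0 0 1 0"], rule exI[of _ "vec4 0 1 0 1"]) (simp add: ln8_def vec4_zero)
lemma lv_form9: "\<exists>a b. a \<noteq> 0 \<and> b \<noteq> 0 \<and> a \<noteq> b \<and> ln9 = {a, b, a + b}"
  by (rule exI[of _ "vec4 0 0 1 0"], rule exI[of _ "vec4 1 0 0 0"]) (simp add: ln9_def vec4_zero)
lemma lv_form10: "\<exists>a b. a \<noteq> 0 \<and> b \<noteq> 0 \<and> a \<noteq> b \<and> ln10 = {a, b, a + b}"
  by (rule exI[of _ "vec4 0 0 1 0"], rule exI[of _ "vec4 1 0 0 1"]) (simp add: ln10_def vec4_zero)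
lemma lv_form11: "\<exists>a b. a \<noteq> 0 \<and> b \<noteq> 0 \<and> a \<noteq> b \<and> ln11 = {a, b, a + b}"
  by (rule exI[of _ "vec4 0 0 1 0"], rule exI[of _ "vec4 1 1 0 0"]) (simp add: ln11_def vec4_zero)
lemma lv_form12: "\<exists>a b. a \<noteq> 0 \<and> b \<noteq> 0 \<and> a \<noteq> b \<and> ln12 = {a, b, a + b}"
  by (rule exI[of _ "vec4 0 0 1 0"], rule exI[of _ "vec4 1 1 0 1"]) (simp add: ln12_def vec4_zero)
lemma lv_form13: "\<exists>a b. a \<noteq> 0 \<and> b \<noteq> 0 \<and> a \<noteq> b \<and> ln13 = {a, b, a + b}"
  by (rule exI[of _ "vec4 0 0 1 1"], rule exI[of _ "vec4 0 1 0 0"]) (simp add: ln13_def vec4_zero)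
lemma lv_form14: "\<exists>a b. a \<noteq> 0 \<and> b \<noteq> 0 \<and> a \<noteq> b \<and> ln14 = {a, b, a + b}"
  by (rule exI[of _ "vec4 0 0 1 1"], rule exI[of _ "vec4 0 1 0 1"]) (simp add: ln14_def vec4_zero)
lemma lv_form15: "\<exists>a b. a \<noteq> 0 \<and> b \<noteq> 0 \<and> a \<noteq> b \<and> ln15 = {a, b, a + b}"
  by (rule exI[of _ "vec4 0 0 1 1"], rule exI[of _ "vec4 1 0 0 0"]) (simp add: ln15_def vec4_zero)
lemma lv_form16: "\<exists>a b. a \<noteq> 0 \<and> b \<noteq> 0 \<and> a \<noteq> b \<and> ln16 = {a, b, a + b}"
  by (rule exI[of _ "vec4 0 0 1 1"], rule exI[of _ "vec4 1 0 0 1"]) (simp add: ln16_def vec4_zero)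
lemma lv_form17: "\<exists>a b. a \<noteq> 0 \<and> b \<noteq> 0 \<and> a \<noteq> b \<and> ln17 = {a, b, a + b}"
  by (rule exI[of _ "vec4 0 0 1 1"], rule exI[of _ "vec4 1 1 0 0"]) (simp add: ln17_def vec4_zero)
lemma lv_form18: "\<exists>a b. a \<noteq> 0 \<and> b \<noteq> 0 \<and> a \<noteq> b \<and> ln18 = {a, b, a + b}"
  by (rule exI[of _ "vec4 0 0 1 1"], rule exI[of _ "vec4 1 1 0 1"]) (simp add: ln18_def vec4_zero)
lemma lv_form19: "\<exists>a b. a \<noteq> 0 \<and> b \<noteq> 0 \<and> a \<noteq> b \<and> ln19 = {a, b, a + b}"
  by (rule exI[of _ "vec4 0 1 0 0"], rule exI[of _ "vec4 1 0 0 0"]) (simp add: ln19_def vec4_zero)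
lemma lv_form20: "\<exists>a b. a \<noteq> 0 \<and> b \<noteq> 0 \<and> a \<noteq> b \<and> ln20 = {a, b, a + b}"
  by (rule exI[of _ "vec4 0 1 0 0"], rule exI[of _ "vec4 1 0 0 1"]) (simp add: ln20_def vec4_zero)
lemma lv_form21: "\<exists>a b. a \<noteq> 0 \<and> b \<noteq> 0 \<and> a \<noteq> b \<and> ln21 = {a, b, a + b}"
  by (rule exI[of _ "vec4 0 1 0 0"], rule exI[of _ "vec4 1 0 1 0"]) (simp add: ln21_def vec4_zero)
lemma lv_form22: "\<exists>a b. a \<noteq> 0 \<and> b \<noteq> 0 \<and> a \<noteq> b \<and> ln22 = {a, b, a + b}"
  by (rule exI[of _ "vec4 0 1 0 0"], rule exI[of _ "vec4 1 0 1 1"]) (simp add: ln22_def vec4_zero)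
lemma lv_form23: "\<exists>a b. a \<noteq> 0 \<and> b \<noteq> 0 \<and> a \<noteq> b \<and> ln23 = {a, b, a + b}"
  by (rule exI[of _ "vec4 0 1 0 1"], rule exI[of _ "vec4 1 0 0 0"]) (simp add: ln23_def vec4_zero)
lemma lv_form24: "\<exists>a b. a \<noteq> 0 \<and> b \<noteq> 0 \<and> a \<noteq> b \<and> ln24 = {a, b, a + b}"
  by (rule exI[of _ "vec4 0 1 0 1"], rule exI[of _ "vec4 1 0 0 1"]) (simp add: ln24_def vec4_zero)
lemma lv_form25: "\<exists>a b. a \<noteq> 0 \<and> b \<noteq> 0 \<and> a \<noteq> b \<and> ln25 = {a, b, a + b}"
  by (rule exI[of _ "vec4 0 1 0 1"], rule exI[of _ "vec4 1 0 1 0"]) (simp add: ln25_def vec4_zero)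
lemma lv_form26: "\<exists>a b. a \<noteq> 0 \<and> b \<noteq> 0 \<and> a \<noteq> b \<and> ln26 = {a, b, a + b}"
  by (rule exI[of _ "vec4 0 1 0 1"], rule exI[of _ "vec4 1 0 1 1"]) (simp add: ln26_def vec4_zero)
lemma lv_form27: "\<exists>a b. a \<noteq> 0 \<and> b \<noteq> 0 \<and> a \<noteq> b \<and> ln27 = {a, b, a + b}"
  by (rule exI[of _ "vec4 0 1 1 0"], rule exI[of _ "vec4 1 0 0 0"]) (simp add: ln27_def vec4_zero)
lemma lv_form28: "\<exists>a b. a \<noteq> 0 \<and> b \<noteq> 0 \<and> a \<noteq> b \<and> ln28 = {a, b, a + b}"
  by (rule exI[of _ "vec4 0 1 1 0"], rule exI[of _ "vec4 1 0 0 1"]) (simp add: ln28_def vec4_zero)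
lemma lv_form29: "\<exists>a b. a \<noteq> 0 \<and> b \<noteq> 0 \<and> a \<noteq> b \<and> ln29 = {a, b, a + b}"
  by (rule exI[of _ "vec4 0 1 1 0"], rule exI[of _ "vec4 1 0 1 0"]) (simp add: ln29_def vec4_zero)
lemma lv_form30: "\<exists>a b. a \<noteq> 0 \<and> b \<noteq> 0 \<and> a \<noteq> b \<and> ln30 = {a, b, a + b}"
  by (rule exI[of _ "vec4 0 1 1 0"], rule exI[of _ "vec4 1 0 1 1"]) (simp add: ln30_def vec4_zero)
lemma lv_form31: "\<exists>a b. a \<noteq> 0 \<and> b \<noteq> 0 \<and> a \<noteq> b \<and> ln31 = {a, b, a + b}"
  by (rule exI[of _ "vec4 0 1 1 1"], rule exI[of _ "vec4 1 0 0 0"]) (simp add: ln31_def vec4_zero)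
lemma lv_form32: "\<exists>a b. a \<noteq> 0 \<and> b \<noteq> 0 \<and> a \<noteq> b \<and> ln32 = {a, b, a + b}"
  by (rule exI[of _ "vec4 0 1 1 1"], rule exI[of _ "vec4 1 0 0 1"]) (simp add: ln32_def vec4_zero)
lemma lv_form33: "\<exists>a b. a \<noteq> 0 \<and> b \<noteq> 0 \<and> a \<noteq> b \<and> ln33 = {a, b, a + b}"
  by (rule exI[of _ "vec4 0 1 1 1"], rule exI[of _ "vec4 1 0 1 0"]) (simp add: ln33_def vec4_zero)
lemma lv_form34: "\<exists>a b. a \<noteq> 0 \<and> b \<noteq> 0 \<and> a \<noteq> b \<and> ln34 = {a, b, a + b}"
  by (rule exI[of _ "vec4 0 1 1 1"], rule exI[of _ "vec4 1 0 1 1"]) (simp add: ln34_def vec4_zero)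
lemmas lv_form = lv_form0 lv_form1 lv_form2 lv_form3 lv_form4 lv_form5 lv_form6 lv_form7 lv_form8 lv_form9 lv_form10 lv_form11 lv_form12 lv_form13 lv_form14 lv_form15 lv_form16 lv_form17 lv_form18 lv_form19 lv_form20 lv_form21 lv_form22 lv_form23 lv_form24 lv_form25 lv_form26 lv_form27 lv_form28 lv_form29 lv_form30 lv_form31 lv_form32 lv_form33 lv_form34
lemma lv_forms: "V \<in> set LV35 \<Longrightarrow> \<exists>a b. a \<noteq> 0 \<and> b \<noteq> 0 \<and> a \<noteq> b \<and> V = {a, b, a + b}"
  unfolding LV35_def list.set by (elim insertE emptyE; hypsubst; rule lv_form)

lemma lv_pg: "V \<in> set LV35 \<Longrightarrow> sng V \<in> pg_lines"
  using lv_forms in_pg by metis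

lemma lv_tri: "V \<in> set LV35 \<Longrightarrow> x \<in> V \<Longrightarrow> y \<in> V \<Longrightarrow> x \<noteq> y \<Longrightarrow> V = {x, y, x + y}"
  using lv_forms tri by metis

lemma pg_lines_eq: "(pg_lines :: (bit^4) set set set) = sng ` set LV35"
proof
  show "pg_lines \<subseteq> sng ` set LV35"
  proof
    fix L :: "(bit^4) set set"
    assume "L \<in> pg_lines"
    then obtain x y where h: "L = sng {x,y,x+y}" "x\<noteq>0" "y\<noteq>0" "x\<noteq>y" unfolding pg_lines_bit by blast
    then obtain V where hv: "V \<in> set LV35" "x\<in>V" "y\<in>V" using enum_sub by blast
    then have "V = {x,y,x+y}" using lv_tri h by blast
    then show "L \<in> sng ` set LV35" using h hv by blast
  qed
  show "sng ` set LV35 \<subseteq> pg_lines" using lv_pg by blast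
qed

definition "SC = ({vec4 1 0 0 0, vec4 0 0 0 1, vec4 1 1 1 1} :: (bit^4) set)"
definition "DC = ({vec4 0 1 1 1, vec4 1 0 0 1, vec4 1 1 1 0} :: (bit^4) set)"
definition "cc = (vec4 0 1 1 0 :: bit^4)"
definition "PL0 = ({vec4 0 0 0 1, vec4 0 0 1 0, vec4 0 0 1 1, vec4 0 1 0 0, vec4 0 1 0 1, vec4 0 1 1 0, vec4 0 1 1 1} :: (bit^4) set)"
definition "PL1 = ({vec4 0 0 1 1, vec4 0 1 0 1, vec4 0 1 1 0, vec4 1 0 0 1, vec4 1 0 1 0, vec4 1 1 0 0, vec4 1 1 1 1} :: (bit^4) set)"
definition "PLi = ({vec4 0 0 1 0, vec4 0 1 0 0, vec4 0 1 1 0, vec4 1 0 0 0, vec4 1 0 1 0, vec4 1 1 0 0, vec4 1 1 1 0} :: (bit^4) set)"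
definition "PX = ({vec4 0 0 0 1, vec4 0 1 1 0, vec4 0 1 1 1, vec4 1 0 0 0, vec4 1 0 0 1, vec4 1 1 1 0, vec4 1 1 1 1} :: (bit^4) set)"
definition "SPw = ({vec4 0 0 0 0, vec4 0 1 1 0, vec4 1 0 1 1, vec4 1 1 0 1} :: (bit^4) set)"
definition "SPw2 = ({vec4 0 0 0 0, vec4 0 1 1 0, vec4 1 0 1 1, vec4 1 1 0 1} :: (bit^4) set)"
definition "IAw = ({vec4 0 0 0 0, vec4 0 1 1 1, vec4 1 0 0 1, vec4 1 1 1 0} :: (bit^4) set)"
definition "IAw2 = ({vec4 0 0 0 0, vec4 0 1 1 1, vec4 1 0 0 1, vec4 1 1 1 0} :: (bit^4) set)"
definition "T0 = ({vec4 0 0 0 1, vec4 0 0 1 0, vec4 0 0 1 1} :: (bit^4) set)"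
definition "T1 = ({vec4 0 1 0 1, vec4 1 0 1 0, vec4 1 1 1 1} :: (bit^4) set)"
definition "Ti = ({vec4 0 1 0 0, vec4 1 0 0 0, vec4 1 1 0 0} :: (bit^4) set)"
lemma all16: "(\<forall>x::bit^4. P x) \<longleftrightarrow> P (vec4 0 0 0 0) \<and> P (vec4 0 0 0 1) \<and> P (vec4 0 0 1 0) \<and> P (vec4 0 0 1 1) \<and> P (vec4 0 1 0 0) \<and> P (vec4 0 1 0 1) \<and> P (vec4 0 1 1 0) \<and> P (vec4 0 1 1 1) \<and> P (vec4 1 0 0 0) \<and> P (vec4 1 0 0 1) \<and> P (vec4 1 0 1 0) \<and> P (vec4 1 0 1 1) \<and> P (vec4 1 1 0 0) \<and> P (vec4 1 1 0 1) \<and> P (vec4 1 1 1 0) \<and> P (vec4 1 1 1 1)"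
  by (metis vec16)

lemma ex_bopt: "(\<exists>t::bit option. P t) \<longleftrightarrow> P None \<or> P (Some 0) \<or> P (Some 1)"
  by (metis bit_cases option.exhaust)

lemma tcubic_eq: "(tcubic :: (bit^4) set set) = sng SC"
  unfolding tcubic_def sng_def SC_def proj_bit
  by (rule set_eqI) (simp add: ex_bopt)

lemma plane_eq: "plane (c::bit^4) = sng {x. x \<noteq> 0 \<and> dot4 c x = 0}"
  by (auto simp: plane_def sng_def proj_bit)

lemma plane0: "plane (vec4 1 0 0 0 :: bit^4) = sng PL0"
  unfolding plane_eq sng_eq unfolding PL0_def set_eq_iff all16 by (simp add: vec4_zero)
lemma plane1: "plane (vec4 1 1 1 1 :: bit^4) = sng PL1"
  unfolding plane_eq sng_eq unfolding PL1_def set_eq_iff all16 by (simp add: vec4_zero)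
lemma planei: "plane (vec4 0 0 0 1 :: bit^4) = sng PLi"
  unfolding plane_eq sng_eq unfolding PLi_def set_eq_iff all16 by (simp add: vec4_zero)
lemma planex: "plane_x1_x2 = (sng PX :: (bit^4) set set)"
proof -
  have "plane_x1_x2 = plane (vec4 0 1 1 0 :: bit^4)" by (simp add: plane_x1_x2_def)
  also have "\<dots> = sng PX" unfolding plane_eq sng_eq unfolding PX_def set_eq_iff all16 by (simp add: vec4_zero)
  finally show ?thesis .
qed

lemma gamma_eq: "(gamma_planes :: (bit^4) set set set) = {sng PL0, sng PL1, sng PLi}"
  unfolding gamma_planes_def
  by (rule set_eqI) (auto simp: ex_bopt plane0 plane1 planei)

lemma tangent_eq: "tangent (Some (0::bit)) = sng T0" "tangent (Some (1::bit)) = sng T1" "tangent (None::bit option) = sng Ti"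
  by (simp_all add: line_bit lin_indep2_bit vec4_zero T0_def T1_def Ti_def insert_commute)

lemma is_Tr_ex: "(\<exists>t::bit option. L = tangent t) \<longleftrightarrow> L = sng T0 \<or> L = sng T1 \<or> L = sng Ti"
  unfolding ex_bopt tangent_eq by blast

lemma gf4_ex: "(\<exists>a::gf4. P a) \<longleftrightarrow> P G0 \<or> P G1 \<or> P GW \<or> P GW2"
  by (metis gf4.exhaust)
lemma gf4_num: "(0::gf4) = G0" "(1::gf4) = G1"
  by (simp_all add: zero_gf4_def one_gf4_def)
lemma gf4_ops: "a + b = gf4_add a b" "a * b = gf4_mul a b" "- a = (a::gf4)"
  by (simp_all add: plus_gf4_def times_gf4_def uminus_gf4_def)
lemma gf4_23: "(2::gf4) = G0" "(3::gf4) = G1"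
  by (simp_all only: numeral.simps gf4_num gf4_ops gf4_add.simps)
lemma gf4_pow: "GW^2 = GW2" "GW^3 = G1" "GW2^2 = GW" "GW2^3 = G1"
  by (simp_all add: power2_eq_square power3_eq_cube gf4_ops)
lemma emb_01: "emb24 0 = G0" "emb24 1 = G1"
  by (simp_all add: emb24_def gf4_num)
lemma range_emb: "range emb24 = {G0, G1}"
  using bit_cases by (auto simp: emb24_def gf4_num)
lemma emb_vec4: "emb24_vec (vec4 a b c d) = vec4 (emb24 a) (emb24 b) (emb24 c) (emb24 d)"
  by (simp add: emb24_vec_def vec_eq_iff forall4)

lemmas gf4_simps = gf4_num gf4_ops gf4_23 gf4_pow emb_01 emb_vec4

lemma SPw_mem_all: "\<forall>x. emb24_vec x \<in> span2 (tc_vec (Some GW)) (tc_vec (Some (GW^2))) \<longleftrightarrow> x \<in> SPw"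
  unfolding all16 span2_def by (simp add: gf4_ex gf4_simps SPw_def)
lemma SPw2_mem_all: "\<forall>x. emb24_vec x \<in> span2 (tc_vec (Some GW2)) (tc_vec (Some (GW2^2))) \<longleftrightarrow> x \<in> SPw2"
  unfolding all16 span2_def by (simp add: gf4_ex gf4_simps SPw2_def)
lemma IAw_mem_all: "\<forall>x. (dot4 (osc_coef (Some GW)) (emb24_vec x) = 0 \<and> dot4 (osc_coef (Some (GW^2))) (emb24_vec x) = 0) \<longleftrightarrow> x \<in> IAw"
  unfolding all16 by (simp add: gf4_simps IAw_def)
lemma IAw2_mem_all: "\<forall>x. (dot4 (osc_coef (Some GW2)) (emb24_vec x) = 0 \<and> dot4 (osc_coef (Some (GW2^2))) (emb24_vec x) = 0) \<longleftrightarrow> x \<in> IAw2"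
  unfolding all16 by (simp add: gf4_simps IAw2_def)

lemmas SPw_mem = SPw_mem_all[rule_format]
lemmas SPw2_mem = SPw2_mem_all[rule_format]
lemmas IAw_mem = IAw_mem_all[rule_format]
lemmas IAw2_mem = IAw2_mem_all[rule_format]
definition "cRC V = (\<exists>a\<in>SC. \<exists>b\<in>SC. a \<noteq> b \<and> a \<in> V \<and> b \<in> V)"
definition "cTr V = (V = T0 \<or> V = T1 \<or> V = Ti)"
definition "cRA V = (V = PL0 \<inter> PL1 \<or> V = PL0 \<inter> PLi \<or> V = PL1 \<inter> PLi)"
definition "cUni V = (card (V \<inter> SC) = 1)"
definition "cExt V = (V \<inter> SC = {})"
definition "cGam V = (V \<subseteq> PL0 \<or> V \<subseteq> PL1 \<or> V \<subseteq> PLi)"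
definition "cG1 V = (of_bool (V \<subseteq> PL0) + of_bool (V \<subseteq> PL1) + of_bool (V \<subseteq> PLi) = (1::nat))"
definition "cIC V = (V \<subseteq> SPw \<or> V \<subseteq> SPw2)"
definition "cIA V = (V \<subseteq> IAw \<or> V \<subseteq> IAw2)"
definition "cPx V = (V \<subseteq> PX)"
definition "iv V = (card (V \<inter> SC), card (V \<inter> DC), cc \<in> V)"

lemma PL_dist: "PL0 \<noteq> PL1" "PL0 \<noteq> PLi" "PL1 \<noteq> PLi"
proof -
  have "vec4 0 0 0 1 \<in> PL0" "vec4 0 0 0 1 \<notin> PL1" "vec4 0 0 0 1 \<notin> PLi"
       "vec4 0 0 1 1 \<in> PL1" "vec4 0 0 1 1 \<notin> PLi"
    by (simp_all add: PL0_def PL1_def PLi_def)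
  then show "PL0 \<noteq> PL1" "PL0 \<noteq> PLi" "PL1 \<noteq> PLi" by blast+
qed

lemma card3: "a \<noteq> b \<Longrightarrow> a \<noteq> c \<Longrightarrow> b \<noteq> c \<Longrightarrow>
  card {P \<in> {a, b, c}. Q P} = of_bool (Q a) + of_bool (Q b) + of_bool (Q c)"
proof -
  assume d: "a \<noteq> b" "a \<noteq> c" "b \<noteq> c"
  have e: "{P \<in> {a, b, c}. Q P} = (if Q a then {a} else {}) \<union> (if Q b then {b} else {}) \<union> (if Q c then {c} else {})"
    by auto
  show ?thesis unfolding e using d by (cases "Q a"; cases "Q b"; cases "Q c") auto
qed

lemma E_RC: "is_RC (sng V) \<longleftrightarrow> sng V \<in> pg_lines \<and> cRC V"
  unfolding is_RC_def tcubic_eq cRC_def bex_sng by auto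
lemma E_Tr: "is_Tr (sng V) \<longleftrightarrow> cTr V"
  unfolding is_Tr_def is_Tr_ex cTr_def by simp
lemma E_RA: "is_RA (sng V) \<longleftrightarrow> sng V \<in> pg_lines \<and> cRA V"
  unfolding is_RA_def gamma_eq cRA_def using PL_dist by (auto simp: sng_int Int_commute)
lemma E_uni: "unisecant (sng V) \<longleftrightarrow> sng V \<in> pg_lines \<and> cUni V"
  unfolding unisecant_def tcubic_eq sng_int card_sng cUni_def by simp
lemma E_ext: "external_line (sng V) \<longleftrightarrow> sng V \<in> pg_lines \<and> cExt V"
  unfolding external_line_def tcubic_eq sng_int sng_empty_iff cExt_def by simp
lemma E_gam: "in_gamma_plane (sng V) \<longleftrightarrow> cGam V"
  unfolding in_gamma_plane_def gamma_eq cGam_def by simp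
lemma E_EG: "is_EG (sng V) \<longleftrightarrow> sng V \<in> pg_lines \<and> cExt V \<and> cG1 V"
proof -
  have "card {\<pi> \<in> gamma_planes. sng V \<subseteq> \<pi>} = of_bool (V \<subseteq> PL0) + of_bool (V \<subseteq> PL1) + of_bool (V \<subseteq> PLi)"
    unfolding gamma_eq by (subst card3) (use PL_dist in auto)
  then show ?thesis unfolding is_EG_def E_ext cG1_def by simp
qed
lemma ball_sng2: "(\<forall>P\<in>sng V. \<forall>x\<in>P. R x) \<longleftrightarrow> (\<forall>x\<in>V. R x)"
  by (auto simp: sng_def)
lemma E_IC: "is_IC2 (sng V) \<longleftrightarrow> sng V \<in> pg_lines \<and> cIC V"
  unfolding is_IC2_def cIC_def gf4_ex range_emb ball_sng2 SPw_mem SPw2_mem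
  by (simp add: subset_eq)
lemma E_IA: "is_IA2 (sng V) \<longleftrightarrow> sng V \<in> pg_lines \<and> cIA V"
  unfolding is_IA2_def cIA_def gf4_ex range_emb ball_sng2 IAw_mem IAw2_mem
  by (simp add: subset_eq)
lemma E_Px: "sng V \<subseteq> plane_x1_x2 \<longleftrightarrow> cPx V"
  unfolding planex cPx_def by simp

lemma cls_gen: "(\<And>L. Q L \<Longrightarrow> L \<in> pg_lines) \<Longrightarrow> {L::(bit^4) set set. Q L} = sng ` {V \<in> set LV35. Q (sng V)}"
proof (intro set_eqI iffI)
  fix L assume q: "\<And>L. Q L \<Longrightarrow> L \<in> pg_lines" and "L \<in> {L. Q L}"
  then have "Q L" "L \<in> sng ` set LV35" using pg_lines_eq by auto
  then show "L \<in> sng ` {V \<in> set LV35. Q (sng V)}" by blast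
next
  fix L assume "L \<in> sng ` {V \<in> set LV35. Q (sng V)}"
  then show "L \<in> {L. Q L}" by blast
qed

lemma Tr_pg: "is_Tr (L::(bit^4) set set) \<Longrightarrow> L \<in> pg_lines"
  unfolding is_Tr_def is_Tr_ex
  using lv_pg[of T0] lv_pg[of T1] lv_pg[of Ti] in_lv
  by (auto simp: T0_def T1_def Ti_def ln_defs)
lemma vals_cRC: "\<not> cRC ln0" "\<not> cRC ln1" "\<not> cRC ln2" "cRC ln3" "\<not> cRC ln4" "\<not> cRC ln5" "cRC ln6" "\<not> cRC ln7" "\<not> cRC ln8" "\<not> cRC ln9" "\<not> cRC ln10" "\<not> cRC ln11" "\<not> cRC ln12" "\<not> cRC ln13" "\<not> cRC ln14" "\<not> cRC ln15" "\<not> cRC ln16" "\<not> cRC ln17" "\<not> cRC ln18" "\<not> cRC ln19" "\<not> cRC ln20" "\<not> cRC ln21" "\<not> cRC ln22" "\<not> cRC ln23" "\<not> cRC ln24" "\<not> cRC ln25" "\<not> cRC ln26" "\<not> cRC ln27" "\<not> cRC ln28" "\<not> cRC ln29" "\<not> cRC ln30" "cRC ln31" "\<not> cRC ln32" "\<not> cRC ln33" "\<not> cRC ln34"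
  by (simp_all add: cRC_def SC_def ln_defs vec4_zero)
lemma vals_cTr: "cTr ln0" "\<not> cTr ln1" "\<not> cTr ln2" "\<not> cTr ln3" "\<not> cTr ln4" "\<not> cTr ln5" "\<not> cTr ln6" "\<not> cTr ln7" "\<not> cTr ln8" "\<not> cTr ln9" "\<not> cTr ln10" "\<not> cTr ln11" "\<not> cTr ln12" "\<not> cTr ln13" "\<not> cTr ln14" "\<not> cTr ln15" "\<not> cTr ln16" "\<not> cTr ln17" "\<not> cTr ln18" "cTr ln19" "\<not> cTr ln20" "\<not> cTr ln21" "\<not> cTr ln22" "\<not> cTr ln23" "\<not> cTr ln24" "cTr ln25" "\<not> cTr ln26" "\<not> cTr ln27" "\<not> cTr ln28" "\<not> cTr ln29" "\<not> cTr ln30" "\<not> cTr ln31" "\<not> cTr ln32" "\<not> cTr ln33" "\<not> cTr ln34"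
  by (simp_all add: cTr_def T0_def T1_def Ti_def set_eq_subset ln_defs vec4_zero)
lemma vals_cRA: "\<not> cRA ln0" "\<not> cRA ln1" "\<not> cRA ln2" "\<not> cRA ln3" "\<not> cRA ln4" "\<not> cRA ln5" "\<not> cRA ln6" "cRA ln7" "\<not> cRA ln8" "\<not> cRA ln9" "\<not> cRA ln10" "\<not> cRA ln11" "\<not> cRA ln12" "\<not> cRA ln13" "cRA ln14" "\<not> cRA ln15" "\<not> cRA ln16" "\<not> cRA ln17" "\<not> cRA ln18" "\<not> cRA ln19" "\<not> cRA ln20" "\<not> cRA ln21" "\<not> cRA ln22" "\<not> cRA ln23" "\<not> cRA ln24" "\<not> cRA ln25" "\<not> cRA ln26" "\<not> cRA ln27" "\<not> cRA ln28" "cRA ln29" "\<not> cRA ln30" "\<not> cRA ln31" "\<not> cRA ln32" "\<not> cRA ln33" "\<not> cRA ln34"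
  by (simp_all add: cRA_def PL0_def PL1_def PLi_def set_eq_subset Int_insert_left ln_defs vec4_zero)
lemma vals_cUni: "cUni ln0" "cUni ln1" "cUni ln2" "\<not> cUni ln3" "cUni ln4" "cUni ln5" "\<not> cUni ln6" "\<not> cUni ln7" "\<not> cUni ln8" "cUni ln9" "\<not> cUni ln10" "\<not> cUni ln11" "cUni ln12" "\<not> cUni ln13" "\<not> cUni ln14" "cUni ln15" "\<not> cUni ln16" "cUni ln17" "\<not> cUni ln18" "cUni ln19" "\<not> cUni ln20" "\<not> cUni ln21" "cUni ln22" "cUni ln23" "\<not> cUni ln24" "cUni ln25" "\<not> cUni ln26" "cUni ln27" "cUni ln28" "\<not> cUni ln29" "\<not> cUni ln30" "\<not> cUni ln31" "\<not> cUni ln32" "\<not> cUni ln33" "\<not> cUni ln34"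
  by (simp_all add: cUni_def SC_def Int_insert_left card_insert_if ln_defs vec4_zero)
lemma vals_cExt: "\<not> cExt ln0" "\<not> cExt ln1" "\<not> cExt ln2" "\<not> cExt ln3" "\<not> cExt ln4" "\<not> cExt ln5" "\<not> cExt ln6" "cExt ln7" "cExt ln8" "\<not> cExt ln9" "cExt ln10" "cExt ln11" "\<not> cExt ln12" "cExt ln13" "cExt ln14" "\<not> cExt ln15" "cExt ln16" "\<not> cExt ln17" "cExt ln18" "\<not> cExt ln19" "cExt ln20" "cExt ln21" "\<not> cExt ln22" "\<not> cExt ln23" "cExt ln24" "\<not> cExt ln25" "cExt ln26" "\<not> cExt ln27" "\<not> cExt ln28" "cExt ln29" "cExt ln30" "\<not> cExt ln31" "cExt ln32" "cExt ln33" "cExt ln34"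
  by (simp_all add: cExt_def SC_def Int_insert_left ln_defs vec4_zero)
lemma vals_cGam: "cGam ln0" "cGam ln1" "cGam ln2" "\<not> cGam ln3" "\<not> cGam ln4" "\<not> cGam ln5" "\<not> cGam ln6" "cGam ln7" "cGam ln8" "cGam ln9" "\<not> cGam ln10" "cGam ln11" "\<not> cGam ln12" "cGam ln13" "cGam ln14" "\<not> cGam ln15" "cGam ln16" "cGam ln17" "\<not> cGam ln18" "cGam ln19" "\<not> cGam ln20" "cGam ln21" "\<not> cGam ln22" "\<not> cGam ln23" "cGam ln24" "cGam ln25" "\<not> cGam ln26" "cGam ln27" "cGam ln28" "cGam ln29" "\<not> cGam ln30" "\<not> cGam ln31" "\<not> cGam ln32" "\<not> cGam ln33" "\<not> cGam ln34"
  by (simp_all add: cGam_def PL0_def PL1_def PLi_def ln_defs vec4_zero)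
lemma vals_cG1: "cG1 ln0" "cG1 ln1" "cG1 ln2" "\<not> cG1 ln3" "\<not> cG1 ln4" "\<not> cG1 ln5" "\<not> cG1 ln6" "\<not> cG1 ln7" "cG1 ln8" "cG1 ln9" "\<not> cG1 ln10" "cG1 ln11" "\<not> cG1 ln12" "cG1 ln13" "\<not> cG1 ln14" "\<not> cG1 ln15" "cG1 ln16" "cG1 ln17" "\<not> cG1 ln18" "cG1 ln19" "\<not> cG1 ln20" "cG1 ln21" "\<not> cG1 ln22" "\<not> cG1 ln23" "cG1 ln24" "cG1 ln25" "\<not> cG1 ln26" "cG1 ln27" "cG1 ln28" "\<not> cG1 ln29" "\<not> cG1 ln30" "\<not> cG1 ln31" "\<not> cG1 ln32" "\<not> cG1 ln33" "\<not> cG1 ln34"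
  by (simp_all add: cG1_def PL0_def PL1_def PLi_def ln_defs vec4_zero)
lemma vals_cIC: "\<not> cIC ln0" "\<not> cIC ln1" "\<not> cIC ln2" "\<not> cIC ln3" "\<not> cIC ln4" "\<not> cIC ln5" "\<not> cIC ln6" "\<not> cIC ln7" "\<not> cIC ln8" "\<not> cIC ln9" "\<not> cIC ln10" "\<not> cIC ln11" "\<not> cIC ln12" "\<not> cIC ln13" "\<not> cIC ln14" "\<not> cIC ln15" "\<not> cIC ln16" "\<not> cIC ln17" "\<not> cIC ln18" "\<not> cIC ln19" "\<not> cIC ln20" "\<not> cIC ln21" "\<not> cIC ln22" "\<not> cIC ln23" "\<not> cIC ln24" "\<not> cIC ln25" "\<not> cIC ln26" "\<not> cIC ln27" "\<not> cIC ln28" "\<not> cIC ln29" "cIC ln30" "\<not> cIC ln31" "\<not> cIC ln32" "\<not> cIC ln33" "\<not> cIC ln34"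
  by (simp_all add: cIC_def SPw_def SPw2_def ln_defs vec4_zero)
lemma vals_cIA: "\<not> cIA ln0" "\<not> cIA ln1" "\<not> cIA ln2" "\<not> cIA ln3" "\<not> cIA ln4" "\<not> cIA ln5" "\<not> cIA ln6" "\<not> cIA ln7" "\<not> cIA ln8" "\<not> cIA ln9" "\<not> cIA ln10" "\<not> cIA ln11" "\<not> cIA ln12" "\<not> cIA ln13" "\<not> cIA ln14" "\<not> cIA ln15" "\<not> cIA ln16" "\<not> cIA ln17" "\<not> cIA ln18" "\<not> cIA ln19" "\<not> cIA ln20" "\<not> cIA ln21" "\<not> cIA ln22" "\<not> cIA ln23" "\<not> cIA ln24" "\<not> cIA ln25" "\<not> cIA ln26" "\<not> cIA ln27" "\<not> cIA ln28" "\<not> cIA ln29" "\<not> cIA ln30" "\<not> cIA ln31" "cIA ln32" "\<not> cIA ln33" "\<not> cIA ln34"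
  by (simp_all add: cIA_def IAw_def IAw2_def ln_defs vec4_zero)
lemma vals_cPx: "\<not> cPx ln0" "\<not> cPx ln1" "cPx ln2" "cPx ln3" "\<not> cPx ln4" "\<not> cPx ln5" "cPx ln6" "\<not> cPx ln7" "\<not> cPx ln8" "\<not> cPx ln9" "\<not> cPx ln10" "\<not> cPx ln11" "\<not> cPx ln12" "\<not> cPx ln13" "\<not> cPx ln14" "\<not> cPx ln15" "\<not> cPx ln16" "\<not> cPx ln17" "\<not> cPx ln18" "\<not> cPx ln19" "\<not> cPx ln20" "\<not> cPx ln21" "\<not> cPx ln22" "\<not> cPx ln23" "\<not> cPx ln24" "\<not> cPx ln25" "\<not> cPx ln26" "cPx ln27" "cPx ln28" "\<not> cPx ln29" "\<not> cPx ln30" "cPx ln31" "cPx ln32" "\<not> cPx ln33" "\<not> cPx ln34"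
  by (simp_all add: cPx_def PX_def ln_defs vec4_zero)
lemma vals_iv: "iv ln0 = (1, 0, False)" "iv ln1 = (1, 0, False)" "iv ln2 = (1, 1, True)" "iv ln3 = (2, 1, False)" "iv ln4 = (1, 0, False)" "iv ln5 = (1, 0, False)" "iv ln6 = (2, 1, False)" "iv ln7 = (0, 0, True)" "iv ln8 = (0, 1, False)" "iv ln9 = (1, 0, False)" "iv ln10 = (0, 1, False)" "iv ln11 = (0, 1, False)" "iv ln12 = (1, 0, False)" "iv ln13 = (0, 1, False)" "iv ln14 = (0, 0, True)" "iv ln15 = (1, 0, False)" "iv ln16 = (0, 1, False)" "iv ln17 = (1, 0, False)" "iv ln18 = (0, 1, False)" "iv ln19 = (1, 0, False)" "iv ln20 = (0, 1, False)" "iv ln21 = (0, 1, False)" "iv ln22 = (1, 0, False)" "iv ln23 = (1, 0, False)" "iv ln24 = (0, 1, False)" "iv ln25 = (1, 0, False)" "iv ln26 = (0, 1, False)" "iv ln27 = (1, 1, True)" "iv ln28 = (1, 1, True)" "iv ln29 = (0, 0, True)" "iv ln30 = (0, 0, True)" "iv ln31 = (2, 1, False)" "iv ln32 = (0, 3, False)" "iv ln33 = (0, 1, False)" "iv ln34 = (0, 1, False)"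
  by (simp_all add: iv_def SC_def DC_def cc_def ln_defs Int_insert_left card_insert_if)
lemmas vals = vals_cRC vals_cTr vals_cRA vals_cUni vals_cExt vals_cGam vals_cG1 vals_cIC vals_cIA vals_cPx
lemma cls_RC: "{L::(bit^4) set set. is_RC L} = sng ` set [ln3, ln6, ln31]"
proof -
  have "{L::(bit^4) set set. is_RC L} = sng ` {V \<in> set LV35. is_RC (sng V)}" by (rule cls_gen) (auto simp: is_RC_def)
  also have "sng ` {V \<in> set LV35. is_RC (sng V)} = sng ` {V \<in> set LV35. cRC V}" using lv_pg by (auto simp: E_RC)
  also have "{V \<in> set LV35. cRC V} = set [ln3, ln6, ln31]" unfolding set_filter[symmetric] LV35_def by (simp add: vals del: set_filter)
  finally show ?thesis .
qed
lemma cls_IA: "{L::(bit^4) set set. is_IA2 L} = sng ` set [ln32]"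
proof -
  have "{L::(bit^4) set set. is_IA2 L} = sng ` {V \<in> set LV35. is_IA2 (sng V)}" by (rule cls_gen) (auto simp: is_IA2_def)
  also have "sng ` {V \<in> set LV35. is_IA2 (sng V)} = sng ` {V \<in> set LV35. cIA V}" using lv_pg by (auto simp: E_IA)
  also have "{V \<in> set LV35. cIA V} = set [ln32]" unfolding set_filter[symmetric] LV35_def by (simp add: vals del: set_filter)
  finally show ?thesis .
qed
lemma cls_UG2: "{L::(bit^4) set set. is_UG2 L} = sng ` set [ln2, ln27, ln28]"
proof -
  have "{L::(bit^4) set set. is_UG2 L} = sng ` {V \<in> set LV35. is_UG2 (sng V)}" by (rule cls_gen) (auto simp: is_UG2_def is_UG_def unisecant_def)
  also have "sng ` {V \<in> set LV35. is_UG2 (sng V)} = sng ` {V \<in> set LV35. cUni V \<and> \<not> cTr V \<and> cGam V \<and> cPx V}" using lv_pg by (auto simp: is_UG2_def is_UG_def E_uni E_Tr E_gam E_Px)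
  also have "{V \<in> set LV35. cUni V \<and> \<not> cTr V \<and> cGam V \<and> cPx V} = set [ln2, ln27, ln28]" unfolding set_filter[symmetric] LV35_def by (simp add: vals del: set_filter)
  finally show ?thesis .
qed
lemma cls_RA: "{L::(bit^4) set set. is_RA L} = sng ` set [ln7, ln14, ln29]"
proof -
  have "{L::(bit^4) set set. is_RA L} = sng ` {V \<in> set LV35. is_RA (sng V)}" by (rule cls_gen) (auto simp: is_RA_def)
  also have "sng ` {V \<in> set LV35. is_RA (sng V)} = sng ` {V \<in> set LV35. cRA V}" using lv_pg by (auto simp: E_RA)
  also have "{V \<in> set LV35. cRA V} = set [ln7, ln14, ln29]" unfolding set_filter[symmetric] LV35_def by (simp add: vals del: set_filter)
  finally show ?thesis .
qed
lemma cls_IC: "{L::(bit^4) set set. is_IC2 L} = sng ` set [ln30]"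
proof -
  have "{L::(bit^4) set set. is_IC2 L} = sng ` {V \<in> set LV35. is_IC2 (sng V)}" by (rule cls_gen) (auto simp: is_IC2_def)
  also have "sng ` {V \<in> set LV35. is_IC2 (sng V)} = sng ` {V \<in> set LV35. cIC V}" using lv_pg by (auto simp: E_IC)
  also have "{V \<in> set LV35. cIC V} = set [ln30]" unfolding set_filter[symmetric] LV35_def by (simp add: vals del: set_filter)
  finally show ?thesis .
qed
lemma cls_Tr: "{L::(bit^4) set set. is_Tr L} = sng ` set [ln0, ln19, ln25]"
proof -
  have "{L::(bit^4) set set. is_Tr L} = sng ` {V \<in> set LV35. is_Tr (sng V)}" by (rule cls_gen) (auto simp: Tr_pg)
  also have "sng ` {V \<in> set LV35. is_Tr (sng V)} = sng ` {V \<in> set LV35. cTr V}" using lv_pg by (auto simp: E_Tr)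
  also have "{V \<in> set LV35. cTr V} = set [ln0, ln19, ln25]" unfolding set_filter[symmetric] LV35_def by (simp add: vals del: set_filter)
  finally show ?thesis .
qed
lemma cls_UG1: "{L::(bit^4) set set. is_UG1 L} = sng ` set [ln1, ln9, ln17]"
proof -
  have "{L::(bit^4) set set. is_UG1 L} = sng ` {V \<in> set LV35. is_UG1 (sng V)}" by (rule cls_gen) (auto simp: is_UG1_def is_UG_def unisecant_def)
  also have "sng ` {V \<in> set LV35. is_UG1 (sng V)} = sng ` {V \<in> set LV35. cUni V \<and> \<not> cTr V \<and> cGam V \<and> \<not> cPx V}" using lv_pg by (auto simp: is_UG1_def is_UG_def E_uni E_Tr E_gam E_Px)
  also have "{V \<in> set LV35. cUni V \<and> \<not> cTr V \<and> cGam V \<and> \<not> cPx V} = set [ln1, ln9, ln17]" unfolding set_filter[symmetric] LV35_def by (simp add: vals del: set_filter)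
  finally show ?thesis .
qed
lemma cls_UnG: "{L::(bit^4) set set. is_UnG L} = sng ` set [ln4, ln5, ln12, ln15, ln22, ln23]"
proof -
  have "{L::(bit^4) set set. is_UnG L} = sng ` {V \<in> set LV35. is_UnG (sng V)}" by (rule cls_gen) (auto simp: is_UnG_def unisecant_def)
  also have "sng ` {V \<in> set LV35. is_UnG (sng V)} = sng ` {V \<in> set LV35. cUni V \<and> \<not> cGam V}" using lv_pg by (auto simp: is_UnG_def E_uni E_gam)
  also have "{V \<in> set LV35. cUni V \<and> \<not> cGam V} = set [ln4, ln5, ln12, ln15, ln22, ln23]" unfolding set_filter[symmetric] LV35_def by (simp add: vals del: set_filter)
  finally show ?thesis .
qed
lemma cls_EG: "{L::(bit^4) set set. is_EG L} = sng ` set [ln8, ln11, ln13, ln16, ln21, ln24]"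
proof -
  have "{L::(bit^4) set set. is_EG L} = sng ` {V \<in> set LV35. is_EG (sng V)}" by (rule cls_gen) (auto simp: is_EG_def external_line_def)
  also have "sng ` {V \<in> set LV35. is_EG (sng V)} = sng ` {V \<in> set LV35. cExt V \<and> cG1 V}" using lv_pg by (auto simp: E_EG)
  also have "{V \<in> set LV35. cExt V \<and> cG1 V} = set [ln8, ln11, ln13, ln16, ln21, ln24]" unfolding set_filter[symmetric] LV35_def by (simp add: vals del: set_filter)
  finally show ?thesis .
qed
lemma cls_EnG: "{L::(bit^4) set set. is_EnG2 L} = sng ` set [ln10, ln18, ln20, ln26, ln33, ln34]"
proof -
  have "{L::(bit^4) set set. is_EnG2 L} = sng ` {V \<in> set LV35. is_EnG2 (sng V)}" by (rule cls_gen) (auto simp: is_EnG2_def external_line_def)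
  also have "sng ` {V \<in> set LV35. is_EnG2 (sng V)} = sng ` {V \<in> set LV35. cExt V \<and> \<not> cGam V \<and> \<not> cIC V \<and> \<not> cIA V}" using lv_pg by (auto simp: is_EnG2_def E_ext E_gam E_IC E_IA)
  also have "{V \<in> set LV35. cExt V \<and> \<not> cGam V \<and> \<not> cIC V \<and> \<not> cIA V} = set [ln10, ln18, ln20, ln26, ln33, ln34]" unfolding set_filter[symmetric] LV35_def by (simp add: vals del: set_filter)
  finally show ?thesis .
qed
lemma mat1_vec4: "(mat 1 :: 'a::{zero,one}^4^4) = vec4 (vec4 1 0 0 0) (vec4 0 1 0 0) (vec4 0 0 1 0) (vec4 0 0 0 1)"
  by (simp add: vec_eq_iff forall4 mat_def)
lemma vm_vec4: "(vec4 a b c d :: 'a::comm_semiring_1^4) v* (vec4 s0 s1 s2 s3) = a *s s0 + b *s s1 + c *s s2 + d *s s3"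
  by (simp add: vec_eq_iff forall4 vector_matrix_mult_def sum4 mult.commute)
lemma mm_vec4: "(vec4 r0 r1 r2 r3 :: 'a::comm_semiring_1^4^4) ** B = vec4 (r0 v* B) (r1 v* B) (r2 v* B) (r3 v* B)"
  by (simp add: vec_eq_iff forall4 matrix_matrix_mult_def vector_matrix_mult_def mult.commute)

lemma Gq_inj: "A \<in> Gq \<Longrightarrow> inj ((*v) (A::bit^4^4))"
  using invertible_left_inverse matrix_left_invertible_injective unfolding Gq_def by blast
lemma pmap_sng: "pmap A ` sng V = sng ((*v) A ` V)"
  by (auto simp: pmap_def sng_def)
lemma lmap_sng: "lmap A (sng V) = sng ((*v) A ` V)"
  unfolding lmap_def pmap_sng ..
lemma Gq_SC: "A \<in> Gq \<Longrightarrow> (*v) (A::bit^4^4) ` SC = SC"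
  unfolding Gq_def tcubic_eq pmap_sng by simp
lemma Gq_intro: "B ** A = mat 1 \<Longrightarrow> (*v) (A::bit^4^4) ` SC = SC \<Longrightarrow> A \<in> Gq"
proof -
  assume h1: "B ** A = mat 1" and h2: "(*v) A ` SC = SC"
  have "invertible A" using h1 invertible_left_inverse by blast
  then show ?thesis unfolding Gq_def tcubic_eq pmap_sng using h2 by simp
qed
lemma img_mult: "(*v) (A ** B) ` V = (*v) A ` ((*v) B ` V)"
  by (simp add: image_image matrix_vector_mul_assoc)
lemma Gq_mult: "A \<in> Gq \<Longrightarrow> B \<in> Gq \<Longrightarrow> A ** B \<in> (Gq :: (bit^4^4) set)"
proof -
  assume a: "A \<in> Gq" and b: "B \<in> Gq"
  have "invertible (A ** B)" using a b invertible_mult unfolding Gq_def by blast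
  moreover have "(*v) (A ** B) ` SC = SC" using a b by (simp add: img_mult Gq_SC)
  ultimately show ?thesis unfolding Gq_def tcubic_eq pmap_sng by simp
qed
lemma Gq_id: "mat 1 \<in> (Gq :: (bit^4^4) set)"
  by (rule Gq_intro[of "mat 1"]) (simp_all add: matrix_mul_lid matrix_vector_mul_lid)

lemma perm_SC: "p \<in> SC \<Longrightarrow> q \<in> SC \<Longrightarrow> r \<in> SC \<Longrightarrow> p \<noteq> q \<Longrightarrow> p \<noteq> r \<Longrightarrow> q \<noteq> r \<Longrightarrow>
   {p + q, p + r, q + r} = DC \<and> p + q + r = cc"
  unfolding SC_def by (elim insertE emptyE; simp add: DC_def cc_def set_eq_subset)

lemma Gq_DC: "A \<in> Gq \<Longrightarrow> (*v) (A::bit^4^4) ` DC = DC \<and> A *v cc = cc"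
proof -
  assume A: "A \<in> Gq"
  have inj: "inj ((*v) A)" using Gq_inj A .
  have S: "(*v) A ` SC = SC" using Gq_SC A .
  define p where "p = A *v vec4 1 0 0 0"
  define q where "q = A *v vec4 0 0 0 1"
  define r where "r = A *v vec4 1 1 1 1"
  have m: "p \<in> SC" "q \<in> SC" "r \<in> SC" unfolding p_def q_def r_def using S by (auto simp: SC_def)
  have d: "p \<noteq> q" "p \<noteq> r" "q \<noteq> r" unfolding p_def q_def r_def using inj by (auto simp: inj_eq)
  have DCe: "DC = {vec4 1 0 0 0 + vec4 0 0 0 1, vec4 1 0 0 0 + vec4 1 1 1 1, vec4 0 0 0 1 + vec4 1 1 1 1}"
    by (simp add: DC_def set_eq_subset)
  have cce: "cc = vec4 1 0 0 0 + vec4 0 0 0 1 + vec4 1 1 1 1" by (simp add: cc_def)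
  have "(*v) A ` DC = {p + q, p + r, q + r}" "A *v cc = p + q + r"
    unfolding DCe cce p_def q_def r_def by (simp_all only: image_insert image_empty matrix_vector_right_distrib)
  then show ?thesis using perm_SC[OF m d] by simp
qed

lemma card_inv_img: "inj f \<Longrightarrow> f ` T = T \<Longrightarrow> card (f ` V \<inter> T) = card (V \<inter> T)"
proof -
  assume i: "inj f" and t: "f ` T = T"
  have "f ` V \<inter> T = f ` (V \<inter> T)" using i t by (metis image_Int)
  then show ?thesis using i by (simp add: card_image inj_on_subset[OF i])
qed

lemma iv_img: "A \<in> Gq \<Longrightarrow> iv ((*v) (A::bit^4^4) ` V) = iv V"
proof -
  assume A: "A \<in> Gq"
  have inj: "inj ((*v) A)" using Gq_inj A .
  have c: "A *v cc = cc" using Gq_DC A by blast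
  have "cc \<in> (*v) A ` V \<longleftrightarrow> A *v cc \<in> (*v) A ` V" by (simp only: c)
  also have "\<dots> \<longleftrightarrow> cc \<in> V" by (rule inj_image_mem_iff[OF inj])
  finally have cc: "cc \<in> (*v) A ` V \<longleftrightarrow> cc \<in> V" .
  then show ?thesis unfolding iv_def
    using cc card_inv_img[OF inj Gq_SC[OF A]] card_inv_img[OF inj conjunct1[OF Gq_DC[OF A]]] by simp
qed

lemma img_lv: "A \<in> Gq \<Longrightarrow> V \<in> set LV35 \<Longrightarrow> (*v) (A::bit^4^4) ` V \<in> set LV35"
proof -
  assume A: "A \<in> Gq" and V: "V \<in> set LV35"
  obtain a b where ab: "a \<noteq> 0" "b \<noteq> 0" "a \<noteq> b" "V = {a, b, a + b}" using lv_forms[OF V] by blast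
  have inj: "inj ((*v) A)" using Gq_inj A .
  have z: "A *v 0 = 0" by (rule matrix_vector_mult_0_right)
  have "A *v a \<noteq> A *v 0" "A *v b \<noteq> A *v 0" "A *v a \<noteq> A *v b"
    using ab(1-3) inj by (simp_all only: inj_eq simp_thms)
  then have n: "A *v a \<noteq> 0" "A *v b \<noteq> 0" "A *v a \<noteq> A *v b" unfolding z .
  have im: "(*v) A ` V = {A *v a, A *v b, A *v a + A *v b}"
    using ab by (simp add: matrix_vector_right_distrib)
  have "sng ((*v) A ` V) \<in> pg_lines" unfolding im using in_pg[OF n] .
  then obtain W where "W \<in> set LV35" "sng ((*v) A ` V) = sng W" unfolding pg_lines_eq by blast
  then show ?thesis by simp
qed

lemma orbit_gen:
  assumes V: "V \<in> set Ol"
    and sub: "set Ol \<subseteq> set LV35"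
    and ivk: "\<forall>W\<in>set Ol. iv W = k"
    and cl: "\<forall>W\<in>set LV35. iv W = k \<longrightarrow> W \<in> set Ol"
    and U: "\<forall>W\<in>set Ol. \<exists>U\<in>Gq. (*v) U ` R = W"
    and T: "\<forall>W\<in>set Ol. \<exists>T\<in>Gq. (*v) T ` W = R"
  shows "line_orbit (sng V) = sng ` set Ol"
proof
  show "line_orbit (sng V) \<subseteq> sng ` set Ol"
  proof
    fix M assume "M \<in> line_orbit (sng V)"
    then obtain A where A: "A \<in> Gq" "M = lmap A (sng V)" unfolding line_orbit_def by blast
    then have M: "M = sng ((*v) A ` V)" by (simp add: lmap_sng)
    have "(*v) A ` V \<in> set LV35" using img_lv A sub V by blast
    moreover have "iv ((*v) A ` V) = k" using iv_img A ivk V by simp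
    ultimately have "(*v) A ` V \<in> set Ol" using cl by blast
    then show "M \<in> sng ` set Ol" using M by blast
  qed
  show "sng ` set Ol \<subseteq> line_orbit (sng V)"
  proof
    fix M assume "M \<in> sng ` set Ol"
    then obtain W where W: "W \<in> set Ol" "M = sng W" by blast
    obtain Uw where Uw: "Uw \<in> Gq" "(*v) Uw ` R = W" using U W by blast
    obtain Tv where Tv: "Tv \<in> Gq" "(*v) Tv ` V = R" using T V by blast
    have G: "Uw ** Tv \<in> Gq" using Gq_mult Uw Tv by blast
    have "lmap (Uw ** Tv) (sng V) = M" using Uw Tv W by (simp add: lmap_sng img_mult)
    then show "M \<in> line_orbit (sng V)" unfolding line_orbit_def using G by blast
  qed
qed
definition "O0 = [ln3, ln6, ln31]"
lemma tU3: "\<exists>U\<in>Gq. (*v) U ` ln3 = ln3" using Gq_id by (intro bexI[of _ "mat 1"]) (auto simp: matrix_vector_mul_lid)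
lemma tT3: "\<exists>U\<in>Gq. (*v) U ` ln3 = ln3" using Gq_id by (intro bexI[of _ "mat 1"]) (auto simp: matrix_vector_mul_lid)
lemma tU6: "\<exists>U\<in>Gq. (*v) U ` ln3 = ln6"
proof (rule bexI[of _ "(vec4 (vec4 0 0 0 1) (vec4 0 0 1 1) (vec4 0 1 0 1) (vec4 1 0 0 1) :: bit^4^4)"])
  show "(vec4 (vec4 0 0 0 1) (vec4 0 0 1 1) (vec4 0 1 0 1) (vec4 1 0 0 1) :: bit^4^4) \<in> Gq" by (rule Gq_intro[of "(vec4 (vec4 1 0 0 1) (vec4 1 0 1 0) (vec4 1 1 0 0) (vec4 1 0 0 0) :: bit^4^4)"]) (simp_all add: mm_vec4 vm_vec4 mat1_vec4 SC_def set_eq_subset)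
qed (simp add: ln3_def ln6_def set_eq_subset)
lemma tT6: "\<exists>U\<in>Gq. (*v) U ` ln6 = ln3"
proof (rule bexI[of _ "(vec4 (vec4 1 0 0 1) (vec4 1 0 1 0) (vec4 1 1 0 0) (vec4 1 0 0 0) :: bit^4^4)"])
  show "(vec4 (vec4 1 0 0 1) (vec4 1 0 1 0) (vec4 1 1 0 0) (vec4 1 0 0 0) :: bit^4^4) \<in> Gq" by (rule Gq_intro[of "(vec4 (vec4 0 0 0 1) (vec4 0 0 1 1) (vec4 0 1 0 1) (vec4 1 0 0 1) :: bit^4^4)"]) (simp_all add: mm_vec4 vm_vec4 mat1_vec4 SC_def set_eq_subset)
qed (simp add: ln3_def ln6_def set_eq_subset)
lemma tU31: "\<exists>U\<in>Gq. (*v) U ` ln3 = ln31"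
proof (rule bexI[of _ "(vec4 (vec4 1 0 0 1) (vec4 0 0 1 1) (vec4 0 1 0 1) (vec4 0 0 0 1) :: bit^4^4)"])
  show "(vec4 (vec4 1 0 0 1) (vec4 0 0 1 1) (vec4 0 1 0 1) (vec4 0 0 0 1) :: bit^4^4) \<in> Gq" by (rule Gq_intro[of "(vec4 (vec4 1 0 0 1) (vec4 0 0 1 1) (vec4 0 1 0 1) (vec4 0 0 0 1) :: bit^4^4)"]) (simp_all add: mm_vec4 vm_vec4 mat1_vec4 SC_def set_eq_subset)
qed (simp add: ln3_def ln31_def set_eq_subset)
lemma tT31: "\<exists>U\<in>Gq. (*v) U ` ln31 = ln3"
proof (rule bexI[of _ "(vec4 (vec4 1 0 0 1) (vec4 0 0 1 1) (vec4 0 1 0 1) (vec4 0 0 0 1) :: bit^4^4)"])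
  show "(vec4 (vec4 1 0 0 1) (vec4 0 0 1 1) (vec4 0 1 0 1) (vec4 0 0 0 1) :: bit^4^4) \<in> Gq" by (rule Gq_intro[of "(vec4 (vec4 1 0 0 1) (vec4 0 0 1 1) (vec4 0 1 0 1) (vec4 0 0 0 1) :: bit^4^4)"]) (simp_all add: mm_vec4 vm_vec4 mat1_vec4 SC_def set_eq_subset)
qed (simp add: ln3_def ln31_def set_eq_subset)
lemma orb0: "\<forall>V\<in>set O0. line_orbit (sng V) = sng ` set O0"
proof (rule ballI, rule orbit_gen[where k="(2, 1, False)" and R="ln3"], assumption)
  show "set O0 \<subseteq> set LV35" by (simp add: O0_def LV35_def)
  show "\<forall>W\<in>set O0. iv W = (2, 1, False)" by (simp add: O0_def vals_iv)
  show "\<forall>W\<in>set LV35. iv W = (2, 1, False) \<longrightarrow> W \<in> set O0" by (simp add: O0_def LV35_def vals_iv)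
  show "\<forall>W\<in>set O0. \<exists>U\<in>Gq. (*v) U ` ln3 = W" by (simp only: O0_def list.set ball_simps insert_iff empty_iff) (intro conjI TrueI tU3 tU6 tU31)
  show "\<forall>W\<in>set O0. \<exists>U\<in>Gq. (*v) U ` W = ln3" by (simp only: O0_def list.set ball_simps insert_iff empty_iff) (intro conjI TrueI tT3 tT6 tT31)
qed
definition "O1 = [ln32]"
lemma tU32: "\<exists>U\<in>Gq. (*v) U ` ln32 = ln32" using Gq_id by (intro bexI[of _ "mat 1"]) (auto simp: matrix_vector_mul_lid)
lemma tT32: "\<exists>U\<in>Gq. (*v) U ` ln32 = ln32" using Gq_id by (intro bexI[of _ "mat 1"]) (auto simp: matrix_vector_mul_lid)
lemma orb1: "\<forall>V\<in>set O1. line_orbit (sng V) = sng ` set O1"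
proof (rule ballI, rule orbit_gen[where k="(0, 3, False)" and R="ln32"], assumption)
  show "set O1 \<subseteq> set LV35" by (simp add: O1_def LV35_def)
  show "\<forall>W\<in>set O1. iv W = (0, 3, False)" by (simp add: O1_def vals_iv)
  show "\<forall>W\<in>set LV35. iv W = (0, 3, False) \<longrightarrow> W \<in> set O1" by (simp add: O1_def LV35_def vals_iv)
  show "\<forall>W\<in>set O1. \<exists>U\<in>Gq. (*v) U ` ln32 = W" by (simp only: O1_def list.set ball_simps insert_iff empty_iff) (intro conjI TrueI tU32)
  show "\<forall>W\<in>set O1. \<exists>U\<in>Gq. (*v) U ` W = ln32" by (simp only: O1_def list.set ball_simps insert_iff empty_iff) (intro conjI TrueI tT32)
qed
definition "O2 = [ln2, ln27, ln28]"
lemma tU2: "\<exists>U\<in>Gq. (*v) U ` ln2 = ln2" using Gq_id by (intro bexI[of _ "mat 1"]) (auto simp: matrix_vector_mul_lid)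
lemma tT2: "\<exists>U\<in>Gq. (*v) U ` ln2 = ln2" using Gq_id by (intro bexI[of _ "mat 1"]) (auto simp: matrix_vector_mul_lid)
lemma tU27: "\<exists>U\<in>Gq. (*v) U ` ln2 = ln27"
proof (rule bexI[of _ "(vec4 (vec4 0 0 0 1) (vec4 0 0 1 0) (vec4 0 1 0 0) (vec4 1 0 0 0) :: bit^4^4)"])
  show "(vec4 (vec4 0 0 0 1) (vec4 0 0 1 0) (vec4 0 1 0 0) (vec4 1 0 0 0) :: bit^4^4) \<in> Gq" by (rule Gq_intro[of "(vec4 (vec4 0 0 0 1) (vec4 0 0 1 0) (vec4 0 1 0 0) (vec4 1 0 0 0) :: bit^4^4)"]) (simp_all add: mm_vec4 vm_vec4 mat1_vec4 SC_def set_eq_subset)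
qed (simp add: ln2_def ln27_def set_eq_subset)
lemma tT27: "\<exists>U\<in>Gq. (*v) U ` ln27 = ln2"
proof (rule bexI[of _ "(vec4 (vec4 0 0 0 1) (vec4 0 0 1 0) (vec4 0 1 0 0) (vec4 1 0 0 0) :: bit^4^4)"])
  show "(vec4 (vec4 0 0 0 1) (vec4 0 0 1 0) (vec4 0 1 0 0) (vec4 1 0 0 0) :: bit^4^4) \<in> Gq" by (rule Gq_intro[of "(vec4 (vec4 0 0 0 1) (vec4 0 0 1 0) (vec4 0 1 0 0) (vec4 1 0 0 0) :: bit^4^4)"]) (simp_all add: mm_vec4 vm_vec4 mat1_vec4 SC_def set_eq_subset)
qed (simp add: ln2_def ln27_def set_eq_subset)
lemma tU28: "\<exists>U\<in>Gq. (*v) U ` ln2 = ln28"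
proof (rule bexI[of _ "(vec4 (vec4 0 0 0 1) (vec4 0 0 1 1) (vec4 0 1 0 1) (vec4 1 0 0 1) :: bit^4^4)"])
  show "(vec4 (vec4 0 0 0 1) (vec4 0 0 1 1) (vec4 0 1 0 1) (vec4 1 0 0 1) :: bit^4^4) \<in> Gq" by (rule Gq_intro[of "(vec4 (vec4 1 0 0 1) (vec4 1 0 1 0) (vec4 1 1 0 0) (vec4 1 0 0 0) :: bit^4^4)"]) (simp_all add: mm_vec4 vm_vec4 mat1_vec4 SC_def set_eq_subset)
qed (simp add: ln2_def ln28_def set_eq_subset)
lemma tT28: "\<exists>U\<in>Gq. (*v) U ` ln28 = ln2"
proof (rule bexI[of _ "(vec4 (vec4 1 0 0 1) (vec4 1 0 1 0) (vec4 1 1 0 0) (vec4 1 0 0 0) :: bit^4^4)"])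
  show "(vec4 (vec4 1 0 0 1) (vec4 1 0 1 0) (vec4 1 1 0 0) (vec4 1 0 0 0) :: bit^4^4) \<in> Gq" by (rule Gq_intro[of "(vec4 (vec4 0 0 0 1) (vec4 0 0 1 1) (vec4 0 1 0 1) (vec4 1 0 0 1) :: bit^4^4)"]) (simp_all add: mm_vec4 vm_vec4 mat1_vec4 SC_def set_eq_subset)
qed (simp add: ln2_def ln28_def set_eq_subset)
lemma orb2: "\<forall>V\<in>set O2. line_orbit (sng V) = sng ` set O2"
proof (rule ballI, rule orbit_gen[where k="(1, 1, True)" and R="ln2"], assumption)
  show "set O2 \<subseteq> set LV35" by (simp add: O2_def LV35_def)
  show "\<forall>W\<in>set O2. iv W = (1, 1, True)" by (simp add: O2_def vals_iv)
  show "\<forall>W\<in>set LV35. iv W = (1, 1, True) \<longrightarrow> W \<in> set O2" by (simp add: O2_def LV35_def vals_iv)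
  show "\<forall>W\<in>set O2. \<exists>U\<in>Gq. (*v) U ` ln2 = W" by (simp only: O2_def list.set ball_simps insert_iff empty_iff) (intro conjI TrueI tU2 tU27 tU28)
  show "\<forall>W\<in>set O2. \<exists>U\<in>Gq. (*v) U ` W = ln2" by (simp only: O2_def list.set ball_simps insert_iff empty_iff) (intro conjI TrueI tT2 tT27 tT28)
qed
definition "O3 = [ln7, ln14, ln29, ln30]"
lemma tU7: "\<exists>U\<in>Gq. (*v) U ` ln7 = ln7" using Gq_id by (intro bexI[of _ "mat 1"]) (auto simp: matrix_vector_mul_lid)
lemma tT7: "\<exists>U\<in>Gq. (*v) U ` ln7 = ln7" using Gq_id by (intro bexI[of _ "mat 1"]) (auto simp: matrix_vector_mul_lid)
lemma tU14: "\<exists>U\<in>Gq. (*v) U ` ln7 = ln14"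
proof (rule bexI[of _ "(vec4 (vec4 0 0 0 1) (vec4 0 0 1 0) (vec4 0 1 0 0) (vec4 1 1 1 0) :: bit^4^4)"])
  show "(vec4 (vec4 0 0 0 1) (vec4 0 0 1 0) (vec4 0 1 0 0) (vec4 1 1 1 0) :: bit^4^4) \<in> Gq" by (rule Gq_intro[of "(vec4 (vec4 0 1 1 1) (vec4 0 0 1 0) (vec4 0 1 0 0) (vec4 1 0 0 0) :: bit^4^4)"]) (simp_all add: mm_vec4 vm_vec4 mat1_vec4 SC_def set_eq_subset)
qed (simp add: ln7_def ln14_def set_eq_subset)
lemma tT14: "\<exists>U\<in>Gq. (*v) U ` ln14 = ln7"
proof (rule bexI[of _ "(vec4 (vec4 0 1 1 1) (vec4 0 0 1 0) (vec4 0 1 0 0) (vec4 1 0 0 0) :: bit^4^4)"])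
  show "(vec4 (vec4 0 1 1 1) (vec4 0 0 1 0) (vec4 0 1 0 0) (vec4 1 0 0 0) :: bit^4^4) \<in> Gq" by (rule Gq_intro[of "(vec4 (vec4 0 0 0 1) (vec4 0 0 1 0) (vec4 0 1 0 0) (vec4 1 1 1 0) :: bit^4^4)"]) (simp_all add: mm_vec4 vm_vec4 mat1_vec4 SC_def set_eq_subset)
qed (simp add: ln7_def ln14_def set_eq_subset)
lemma tU29: "\<exists>U\<in>Gq. (*v) U ` ln7 = ln29"
proof (rule bexI[of _ "(vec4 (vec4 0 1 1 1) (vec4 0 0 1 0) (vec4 0 1 0 0) (vec4 1 0 0 0) :: bit^4^4)"])
  show "(vec4 (vec4 0 1 1 1) (vec4 0 0 1 0) (vec4 0 1 0 0) (vec4 1 0 0 0) :: bit^4^4) \<in> Gq" by (rule Gq_intro[of "(vec4 (vec4 0 0 0 1) (vec4 0 0 1 0) (vec4 0 1 0 0) (vec4 1 1 1 0) :: bit^4^4)"]) (simp_all add: mm_vec4 vm_vec4 mat1_vec4 SC_def set_eq_subset)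
qed (simp add: ln7_def ln29_def set_eq_subset)
lemma tT29: "\<exists>U\<in>Gq. (*v) U ` ln29 = ln7"
proof (rule bexI[of _ "(vec4 (vec4 0 0 0 1) (vec4 0 0 1 0) (vec4 0 1 0 0) (vec4 1 1 1 0) :: bit^4^4)"])
  show "(vec4 (vec4 0 0 0 1) (vec4 0 0 1 0) (vec4 0 1 0 0) (vec4 1 1 1 0) :: bit^4^4) \<in> Gq" by (rule Gq_intro[of "(vec4 (vec4 0 1 1 1) (vec4 0 0 1 0) (vec4 0 1 0 0) (vec4 1 0 0 0) :: bit^4^4)"]) (simp_all add: mm_vec4 vm_vec4 mat1_vec4 SC_def set_eq_subset)
qed (simp add: ln7_def ln29_def set_eq_subset)
lemma tU30: "\<exists>U\<in>Gq. (*v) U ` ln7 = ln30"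
proof (rule bexI[of _ "(vec4 (vec4 0 1 1 1) (vec4 0 0 1 0) (vec4 0 1 0 0) (vec4 1 1 1 0) :: bit^4^4)"])
  show "(vec4 (vec4 0 1 1 1) (vec4 0 0 1 0) (vec4 0 1 0 0) (vec4 1 1 1 0) :: bit^4^4) \<in> Gq" by (rule Gq_intro[of "(vec4 (vec4 0 1 1 1) (vec4 0 0 1 0) (vec4 0 1 0 0) (vec4 1 1 1 0) :: bit^4^4)"]) (simp_all add: mm_vec4 vm_vec4 mat1_vec4 SC_def set_eq_subset)
qed (simp add: ln7_def ln30_def set_eq_subset)
lemma tT30: "\<exists>U\<in>Gq. (*v) U ` ln30 = ln7"
proof (rule bexI[of _ "(vec4 (vec4 0 1 1 1) (vec4 0 0 1 0) (vec4 0 1 0 0) (vec4 1 1 1 0) :: bit^4^4)"])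
  show "(vec4 (vec4 0 1 1 1) (vec4 0 0 1 0) (vec4 0 1 0 0) (vec4 1 1 1 0) :: bit^4^4) \<in> Gq" by (rule Gq_intro[of "(vec4 (vec4 0 1 1 1) (vec4 0 0 1 0) (vec4 0 1 0 0) (vec4 1 1 1 0) :: bit^4^4)"]) (simp_all add: mm_vec4 vm_vec4 mat1_vec4 SC_def set_eq_subset)
qed (simp add: ln7_def ln30_def set_eq_subset)
lemma orb3: "\<forall>V\<in>set O3. line_orbit (sng V) = sng ` set O3"
proof (rule ballI, rule orbit_gen[where k="(0, 0, True)" and R="ln7"], assumption)
  show "set O3 \<subseteq> set LV35" by (simp add: O3_def LV35_def)
  show "\<forall>W\<in>set O3. iv W = (0, 0, True)" by (simp add: O3_def vals_iv)
  show "\<forall>W\<in>set LV35. iv W = (0, 0, True) \<longrightarrow> W \<in> set O3" by (simp add: O3_def LV35_def vals_iv)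
  show "\<forall>W\<in>set O3. \<exists>U\<in>Gq. (*v) U ` ln7 = W" by (simp only: O3_def list.set ball_simps insert_iff empty_iff) (intro conjI TrueI tU7 tU14 tU29 tU30)
  show "\<forall>W\<in>set O3. \<exists>U\<in>Gq. (*v) U ` W = ln7" by (simp only: O3_def list.set ball_simps insert_iff empty_iff) (intro conjI TrueI tT7 tT14 tT29 tT30)
qed
definition "O4 = [ln0, ln19, ln25, ln1, ln9, ln17, ln4, ln5, ln12, ln15, ln22, ln23]"
lemma tU0: "\<exists>U\<in>Gq. (*v) U ` ln0 = ln0" using Gq_id by (intro bexI[of _ "mat 1"]) (auto simp: matrix_vector_mul_lid)
lemma tT0: "\<exists>U\<in>Gq. (*v) U ` ln0 = ln0" using Gq_id by (intro bexI[of _ "mat 1"]) (auto simp: matrix_vector_mul_lid)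
lemma tU19: "\<exists>U\<in>Gq. (*v) U ` ln0 = ln19"
proof (rule bexI[of _ "(vec4 (vec4 0 0 0 1) (vec4 0 0 1 0) (vec4 0 1 0 0) (vec4 1 0 0 0) :: bit^4^4)"])
  show "(vec4 (vec4 0 0 0 1) (vec4 0 0 1 0) (vec4 0 1 0 0) (vec4 1 0 0 0) :: bit^4^4) \<in> Gq" by (rule Gq_intro[of "(vec4 (vec4 0 0 0 1) (vec4 0 0 1 0) (vec4 0 1 0 0) (vec4 1 0 0 0) :: bit^4^4)"]) (simp_all add: mm_vec4 vm_vec4 mat1_vec4 SC_def set_eq_subset)
qed (simp add: ln0_def ln19_def set_eq_subset)
lemma tT19: "\<exists>U\<in>Gq. (*v) U ` ln19 = ln0"
proof (rule bexI[of _ "(vec4 (vec4 0 0 0 1) (vec4 0 0 1 0) (vec4 0 1 0 0) (vec4 1 0 0 0) :: bit^4^4)"])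
  show "(vec4 (vec4 0 0 0 1) (vec4 0 0 1 0) (vec4 0 1 0 0) (vec4 1 0 0 0) :: bit^4^4) \<in> Gq" by (rule Gq_intro[of "(vec4 (vec4 0 0 0 1) (vec4 0 0 1 0) (vec4 0 1 0 0) (vec4 1 0 0 0) :: bit^4^4)"]) (simp_all add: mm_vec4 vm_vec4 mat1_vec4 SC_def set_eq_subset)
qed (simp add: ln0_def ln19_def set_eq_subset)
lemma tU25: "\<exists>U\<in>Gq. (*v) U ` ln0 = ln25"
proof (rule bexI[of _ "(vec4 (vec4 0 0 0 1) (vec4 0 0 1 1) (vec4 0 1 0 1) (vec4 1 1 1 1) :: bit^4^4)"])
  show "(vec4 (vec4 0 0 0 1) (vec4 0 0 1 1) (vec4 0 1 0 1) (vec4 1 1 1 1) :: bit^4^4) \<in> Gq" by (rule Gq_intro[of "(vec4 (vec4 1 1 1 1) (vec4 1 0 1 0) (vec4 1 1 0 0) (vec4 1 0 0 0) :: bit^4^4)"]) (simp_all add: mm_vec4 vm_vec4 mat1_vec4 SC_def set_eq_subset)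
qed (simp add: ln0_def ln25_def set_eq_subset)
lemma tT25: "\<exists>U\<in>Gq. (*v) U ` ln25 = ln0"
proof (rule bexI[of _ "(vec4 (vec4 1 1 1 1) (vec4 1 0 1 0) (vec4 1 1 0 0) (vec4 1 0 0 0) :: bit^4^4)"])
  show "(vec4 (vec4 1 1 1 1) (vec4 1 0 1 0) (vec4 1 1 0 0) (vec4 1 0 0 0) :: bit^4^4) \<in> Gq" by (rule Gq_intro[of "(vec4 (vec4 0 0 0 1) (vec4 0 0 1 1) (vec4 0 1 0 1) (vec4 1 1 1 1) :: bit^4^4)"]) (simp_all add: mm_vec4 vm_vec4 mat1_vec4 SC_def set_eq_subset)
qed (simp add: ln0_def ln25_def set_eq_subset)
lemma tU1: "\<exists>U\<in>Gq. (*v) U ` ln0 = ln1"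
proof (rule bexI[of _ "(vec4 (vec4 1 0 0 0) (vec4 0 0 1 0) (vec4 0 1 0 0) (vec4 0 0 0 1) :: bit^4^4)"])
  show "(vec4 (vec4 1 0 0 0) (vec4 0 0 1 0) (vec4 0 1 0 0) (vec4 0 0 0 1) :: bit^4^4) \<in> Gq" by (rule Gq_intro[of "(vec4 (vec4 1 0 0 0) (vec4 0 0 1 0) (vec4 0 1 0 0) (vec4 0 0 0 1) :: bit^4^4)"]) (simp_all add: mm_vec4 vm_vec4 mat1_vec4 SC_def set_eq_subset)
qed (simp add: ln0_def ln1_def set_eq_subset)
lemma tT1: "\<exists>U\<in>Gq. (*v) U ` ln1 = ln0"
proof (rule bexI[of _ "(vec4 (vec4 1 0 0 0) (vec4 0 0 1 0) (vec4 0 1 0 0) (vec4 0 0 0 1) :: bit^4^4)"])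
  show "(vec4 (vec4 1 0 0 0) (vec4 0 0 1 0) (vec4 0 1 0 0) (vec4 0 0 0 1) :: bit^4^4) \<in> Gq" by (rule Gq_intro[of "(vec4 (vec4 1 0 0 0) (vec4 0 0 1 0) (vec4 0 1 0 0) (vec4 0 0 0 1) :: bit^4^4)"]) (simp_all add: mm_vec4 vm_vec4 mat1_vec4 SC_def set_eq_subset)
qed (simp add: ln0_def ln1_def set_eq_subset)
lemma tU9: "\<exists>U\<in>Gq. (*v) U ` ln0 = ln9"
proof (rule bexI[of _ "(vec4 (vec4 0 0 0 1) (vec4 0 1 0 0) (vec4 0 0 1 0) (vec4 1 0 0 0) :: bit^4^4)"])
  show "(vec4 (vec4 0 0 0 1) (vec4 0 1 0 0) (vec4 0 0 1 0) (vec4 1 0 0 0) :: bit^4^4) \<in> Gq" by (rule Gq_intro[of "(vec4 (vec4 0 0 0 1) (vec4 0 1 0 0) (vec4 0 0 1 0) (vec4 1 0 0 0) :: bit^4^4)"]) (simp_all add: mm_vec4 vm_vec4 mat1_vec4 SC_def set_eq_subset)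
qed (simp add: ln0_def ln9_def set_eq_subset)
lemma tT9: "\<exists>U\<in>Gq. (*v) U ` ln9 = ln0"
proof (rule bexI[of _ "(vec4 (vec4 0 0 0 1) (vec4 0 1 0 0) (vec4 0 0 1 0) (vec4 1 0 0 0) :: bit^4^4)"])
  show "(vec4 (vec4 0 0 0 1) (vec4 0 1 0 0) (vec4 0 0 1 0) (vec4 1 0 0 0) :: bit^4^4) \<in> Gq" by (rule Gq_intro[of "(vec4 (vec4 0 0 0 1) (vec4 0 1 0 0) (vec4 0 0 1 0) (vec4 1 0 0 0) :: bit^4^4)"]) (simp_all add: mm_vec4 vm_vec4 mat1_vec4 SC_def set_eq_subset)
qed (simp add: ln0_def ln9_def set_eq_subset)
lemma tU17: "\<exists>U\<in>Gq. (*v) U ` ln0 = ln17"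
proof (rule bexI[of _ "(vec4 (vec4 0 0 0 1) (vec4 0 1 0 1) (vec4 0 0 1 1) (vec4 1 1 1 1) :: bit^4^4)"])
  show "(vec4 (vec4 0 0 0 1) (vec4 0 1 0 1) (vec4 0 0 1 1) (vec4 1 1 1 1) :: bit^4^4) \<in> Gq" by (rule Gq_intro[of "(vec4 (vec4 1 1 1 1) (vec4 1 1 0 0) (vec4 1 0 1 0) (vec4 1 0 0 0) :: bit^4^4)"]) (simp_all add: mm_vec4 vm_vec4 mat1_vec4 SC_def set_eq_subset)
qed (simp add: ln0_def ln17_def set_eq_subset)
lemma tT17: "\<exists>U\<in>Gq. (*v) U ` ln17 = ln0"
proof (rule bexI[of _ "(vec4 (vec4 1 1 1 1) (vec4 1 1 0 0) (vec4 1 0 1 0) (vec4 1 0 0 0) :: bit^4^4)"])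
  show "(vec4 (vec4 1 1 1 1) (vec4 1 1 0 0) (vec4 1 0 1 0) (vec4 1 0 0 0) :: bit^4^4) \<in> Gq" by (rule Gq_intro[of "(vec4 (vec4 0 0 0 1) (vec4 0 1 0 1) (vec4 0 0 1 1) (vec4 1 1 1 1) :: bit^4^4)"]) (simp_all add: mm_vec4 vm_vec4 mat1_vec4 SC_def set_eq_subset)
qed (simp add: ln0_def ln17_def set_eq_subset)
lemma tU4: "\<exists>U\<in>Gq. (*v) U ` ln0 = ln4"
proof (rule bexI[of _ "(vec4 (vec4 1 1 1 0) (vec4 0 1 0 0) (vec4 0 0 1 0) (vec4 0 0 0 1) :: bit^4^4)"])
  show "(vec4 (vec4 1 1 1 0) (vec4 0 1 0 0) (vec4 0 0 1 0) (vec4 0 0 0 1) :: bit^4^4) \<in> Gq" by (rule Gq_intro[of "(vec4 (vec4 1 1 1 0) (vec4 0 1 0 0) (vec4 0 0 1 0) (vec4 0 0 0 1) :: bit^4^4)"]) (simp_all add: mm_vec4 vm_vec4 mat1_vec4 SC_def set_eq_subset)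
qed (simp add: ln0_def ln4_def set_eq_subset)
lemma tT4: "\<exists>U\<in>Gq. (*v) U ` ln4 = ln0"
proof (rule bexI[of _ "(vec4 (vec4 1 1 1 0) (vec4 0 1 0 0) (vec4 0 0 1 0) (vec4 0 0 0 1) :: bit^4^4)"])
  show "(vec4 (vec4 1 1 1 0) (vec4 0 1 0 0) (vec4 0 0 1 0) (vec4 0 0 0 1) :: bit^4^4) \<in> Gq" by (rule Gq_intro[of "(vec4 (vec4 1 1 1 0) (vec4 0 1 0 0) (vec4 0 0 1 0) (vec4 0 0 0 1) :: bit^4^4)"]) (simp_all add: mm_vec4 vm_vec4 mat1_vec4 SC_def set_eq_subset)
qed (simp add: ln0_def ln4_def set_eq_subset)
lemma tU5: "\<exists>U\<in>Gq. (*v) U ` ln0 = ln5"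
proof (rule bexI[of _ "(vec4 (vec4 1 1 1 0) (vec4 0 0 1 0) (vec4 0 1 0 0) (vec4 0 0 0 1) :: bit^4^4)"])
  show "(vec4 (vec4 1 1 1 0) (vec4 0 0 1 0) (vec4 0 1 0 0) (vec4 0 0 0 1) :: bit^4^4) \<in> Gq" by (rule Gq_intro[of "(vec4 (vec4 1 1 1 0) (vec4 0 0 1 0) (vec4 0 1 0 0) (vec4 0 0 0 1) :: bit^4^4)"]) (simp_all add: mm_vec4 vm_vec4 mat1_vec4 SC_def set_eq_subset)
qed (simp add: ln0_def ln5_def set_eq_subset)
lemma tT5: "\<exists>U\<in>Gq. (*v) U ` ln5 = ln0"
proof (rule bexI[of _ "(vec4 (vec4 1 1 1 0) (vec4 0 0 1 0) (vec4 0 1 0 0) (vec4 0 0 0 1) :: bit^4^4)"])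
  show "(vec4 (vec4 1 1 1 0) (vec4 0 0 1 0) (vec4 0 1 0 0) (vec4 0 0 0 1) :: bit^4^4) \<in> Gq" by (rule Gq_intro[of "(vec4 (vec4 1 1 1 0) (vec4 0 0 1 0) (vec4 0 1 0 0) (vec4 0 0 0 1) :: bit^4^4)"]) (simp_all add: mm_vec4 vm_vec4 mat1_vec4 SC_def set_eq_subset)
qed (simp add: ln0_def ln5_def set_eq_subset)
lemma tU12: "\<exists>U\<in>Gq. (*v) U ` ln0 = ln12"
proof (rule bexI[of _ "(vec4 (vec4 0 0 0 1) (vec4 0 1 0 1) (vec4 0 0 1 1) (vec4 1 0 0 1) :: bit^4^4)"])
  show "(vec4 (vec4 0 0 0 1) (vec4 0 1 0 1) (vec4 0 0 1 1) (vec4 1 0 0 1) :: bit^4^4) \<in> Gq" by (rule Gq_intro[of "(vec4 (vec4 1 0 0 1) (vec4 1 1 0 0) (vec4 1 0 1 0) (vec4 1 0 0 0) :: bit^4^4)"]) (simp_all add: mm_vec4 vm_vec4 mat1_vec4 SC_def set_eq_subset)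
qed (simp add: ln0_def ln12_def set_eq_subset)
lemma tT12: "\<exists>U\<in>Gq. (*v) U ` ln12 = ln0"
proof (rule bexI[of _ "(vec4 (vec4 1 0 0 1) (vec4 1 1 0 0) (vec4 1 0 1 0) (vec4 1 0 0 0) :: bit^4^4)"])
  show "(vec4 (vec4 1 0 0 1) (vec4 1 1 0 0) (vec4 1 0 1 0) (vec4 1 0 0 0) :: bit^4^4) \<in> Gq" by (rule Gq_intro[of "(vec4 (vec4 0 0 0 1) (vec4 0 1 0 1) (vec4 0 0 1 1) (vec4 1 0 0 1) :: bit^4^4)"]) (simp_all add: mm_vec4 vm_vec4 mat1_vec4 SC_def set_eq_subset)
qed (simp add: ln0_def ln12_def set_eq_subset)
lemma tU15: "\<exists>U\<in>Gq. (*v) U ` ln0 = ln15"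
proof (rule bexI[of _ "(vec4 (vec4 0 0 0 1) (vec4 0 1 0 0) (vec4 0 0 1 0) (vec4 1 1 1 0) :: bit^4^4)"])
  show "(vec4 (vec4 0 0 0 1) (vec4 0 1 0 0) (vec4 0 0 1 0) (vec4 1 1 1 0) :: bit^4^4) \<in> Gq" by (rule Gq_intro[of "(vec4 (vec4 0 1 1 1) (vec4 0 1 0 0) (vec4 0 0 1 0) (vec4 1 0 0 0) :: bit^4^4)"]) (simp_all add: mm_vec4 vm_vec4 mat1_vec4 SC_def set_eq_subset)
qed (simp add: ln0_def ln15_def set_eq_subset)
lemma tT15: "\<exists>U\<in>Gq. (*v) U ` ln15 = ln0"
proof (rule bexI[of _ "(vec4 (vec4 0 1 1 1) (vec4 0 1 0 0) (vec4 0 0 1 0) (vec4 1 0 0 0) :: bit^4^4)"])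
  show "(vec4 (vec4 0 1 1 1) (vec4 0 1 0 0) (vec4 0 0 1 0) (vec4 1 0 0 0) :: bit^4^4) \<in> Gq" by (rule Gq_intro[of "(vec4 (vec4 0 0 0 1) (vec4 0 1 0 0) (vec4 0 0 1 0) (vec4 1 1 1 0) :: bit^4^4)"]) (simp_all add: mm_vec4 vm_vec4 mat1_vec4 SC_def set_eq_subset)
qed (simp add: ln0_def ln15_def set_eq_subset)
lemma tU22: "\<exists>U\<in>Gq. (*v) U ` ln0 = ln22"
proof (rule bexI[of _ "(vec4 (vec4 0 0 0 1) (vec4 0 0 1 1) (vec4 0 1 0 1) (vec4 1 0 0 1) :: bit^4^4)"])
  show "(vec4 (vec4 0 0 0 1) (vec4 0 0 1 1) (vec4 0 1 0 1) (vec4 1 0 0 1) :: bit^4^4) \<in> Gq" by (rule Gq_intro[of "(vec4 (vec4 1 0 0 1) (vec4 1 0 1 0) (vec4 1 1 0 0) (vec4 1 0 0 0) :: bit^4^4)"]) (simp_all add: mm_vec4 vm_vec4 mat1_vec4 SC_def set_eq_subset)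
qed (simp add: ln0_def ln22_def set_eq_subset)
lemma tT22: "\<exists>U\<in>Gq. (*v) U ` ln22 = ln0"
proof (rule bexI[of _ "(vec4 (vec4 1 0 0 1) (vec4 1 0 1 0) (vec4 1 1 0 0) (vec4 1 0 0 0) :: bit^4^4)"])
  show "(vec4 (vec4 1 0 0 1) (vec4 1 0 1 0) (vec4 1 1 0 0) (vec4 1 0 0 0) :: bit^4^4) \<in> Gq" by (rule Gq_intro[of "(vec4 (vec4 0 0 0 1) (vec4 0 0 1 1) (vec4 0 1 0 1) (vec4 1 0 0 1) :: bit^4^4)"]) (simp_all add: mm_vec4 vm_vec4 mat1_vec4 SC_def set_eq_subset)
qed (simp add: ln0_def ln22_def set_eq_subset)
lemma tU23: "\<exists>U\<in>Gq. (*v) U ` ln0 = ln23"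
proof (rule bexI[of _ "(vec4 (vec4 0 0 0 1) (vec4 0 0 1 0) (vec4 0 1 0 0) (vec4 1 1 1 0) :: bit^4^4)"])
  show "(vec4 (vec4 0 0 0 1) (vec4 0 0 1 0) (vec4 0 1 0 0) (vec4 1 1 1 0) :: bit^4^4) \<in> Gq" by (rule Gq_intro[of "(vec4 (vec4 0 1 1 1) (vec4 0 0 1 0) (vec4 0 1 0 0) (vec4 1 0 0 0) :: bit^4^4)"]) (simp_all add: mm_vec4 vm_vec4 mat1_vec4 SC_def set_eq_subset)
qed (simp add: ln0_def ln23_def set_eq_subset)
lemma tT23: "\<exists>U\<in>Gq. (*v) U ` ln23 = ln0"
proof (rule bexI[of _ "(vec4 (vec4 0 1 1 1) (vec4 0 0 1 0) (vec4 0 1 0 0) (vec4 1 0 0 0) :: bit^4^4)"])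
  show "(vec4 (vec4 0 1 1 1) (vec4 0 0 1 0) (vec4 0 1 0 0) (vec4 1 0 0 0) :: bit^4^4) \<in> Gq" by (rule Gq_intro[of "(vec4 (vec4 0 0 0 1) (vec4 0 0 1 0) (vec4 0 1 0 0) (vec4 1 1 1 0) :: bit^4^4)"]) (simp_all add: mm_vec4 vm_vec4 mat1_vec4 SC_def set_eq_subset)
qed (simp add: ln0_def ln23_def set_eq_subset)
lemma orb4: "\<forall>V\<in>set O4. line_orbit (sng V) = sng ` set O4"
proof (rule ballI, rule orbit_gen[where k="(1, 0, False)" and R="ln0"], assumption)
  show "set O4 \<subseteq> set LV35" by (simp add: O4_def LV35_def)
  show "\<forall>W\<in>set O4. iv W = (1, 0, False)" by (simp add: O4_def vals_iv)
  show "\<forall>W\<in>set LV35. iv W = (1, 0, False) \<longrightarrow> W \<in> set O4" by (simp add: O4_def LV35_def vals_iv)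
  show "\<forall>W\<in>set O4. \<exists>U\<in>Gq. (*v) U ` ln0 = W" by (simp only: O4_def list.set ball_simps insert_iff empty_iff) (intro conjI TrueI tU0 tU19 tU25 tU1 tU9 tU17 tU4 tU5 tU12 tU15 tU22 tU23)
  show "\<forall>W\<in>set O4. \<exists>U\<in>Gq. (*v) U ` W = ln0" by (simp only: O4_def list.set ball_simps insert_iff empty_iff) (intro conjI TrueI tT0 tT19 tT25 tT1 tT9 tT17 tT4 tT5 tT12 tT15 tT22 tT23)
qed
definition "O5 = [ln8, ln11, ln13, ln16, ln21, ln24, ln10, ln18, ln20, ln26, ln33, ln34]"
lemma tU8: "\<exists>U\<in>Gq. (*v) U ` ln8 = ln8" using Gq_id by (intro bexI[of _ "mat 1"]) (auto simp: matrix_vector_mul_lid)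
lemma tT8: "\<exists>U\<in>Gq. (*v) U ` ln8 = ln8" using Gq_id by (intro bexI[of _ "mat 1"]) (auto simp: matrix_vector_mul_lid)
lemma tU11: "\<exists>U\<in>Gq. (*v) U ` ln8 = ln11"
proof (rule bexI[of _ "(vec4 (vec4 0 0 0 1) (vec4 0 1 0 0) (vec4 0 0 1 0) (vec4 1 0 0 0) :: bit^4^4)"])
  show "(vec4 (vec4 0 0 0 1) (vec4 0 1 0 0) (vec4 0 0 1 0) (vec4 1 0 0 0) :: bit^4^4) \<in> Gq" by (rule Gq_intro[of "(vec4 (vec4 0 0 0 1) (vec4 0 1 0 0) (vec4 0 0 1 0) (vec4 1 0 0 0) :: bit^4^4)"]) (simp_all add: mm_vec4 vm_vec4 mat1_vec4 SC_def set_eq_subset)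
qed (simp add: ln8_def ln11_def set_eq_subset)
lemma tT11: "\<exists>U\<in>Gq. (*v) U ` ln11 = ln8"
proof (rule bexI[of _ "(vec4 (vec4 0 0 0 1) (vec4 0 1 0 0) (vec4 0 0 1 0) (vec4 1 0 0 0) :: bit^4^4)"])
  show "(vec4 (vec4 0 0 0 1) (vec4 0 1 0 0) (vec4 0 0 1 0) (vec4 1 0 0 0) :: bit^4^4) \<in> Gq" by (rule Gq_intro[of "(vec4 (vec4 0 0 0 1) (vec4 0 1 0 0) (vec4 0 0 1 0) (vec4 1 0 0 0) :: bit^4^4)"]) (simp_all add: mm_vec4 vm_vec4 mat1_vec4 SC_def set_eq_subset)
qed (simp add: ln8_def ln11_def set_eq_subset)
lemma tU13: "\<exists>U\<in>Gq. (*v) U ` ln8 = ln13"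
proof (rule bexI[of _ "(vec4 (vec4 1 0 0 0) (vec4 0 0 1 0) (vec4 0 1 0 0) (vec4 0 0 0 1) :: bit^4^4)"])
  show "(vec4 (vec4 1 0 0 0) (vec4 0 0 1 0) (vec4 0 1 0 0) (vec4 0 0 0 1) :: bit^4^4) \<in> Gq" by (rule Gq_intro[of "(vec4 (vec4 1 0 0 0) (vec4 0 0 1 0) (vec4 0 1 0 0) (vec4 0 0 0 1) :: bit^4^4)"]) (simp_all add: mm_vec4 vm_vec4 mat1_vec4 SC_def set_eq_subset)
qed (simp add: ln8_def ln13_def set_eq_subset)
lemma tT13: "\<exists>U\<in>Gq. (*v) U ` ln13 = ln8"
proof (rule bexI[of _ "(vec4 (vec4 1 0 0 0) (vec4 0 0 1 0) (vec4 0 1 0 0) (vec4 0 0 0 1) :: bit^4^4)"])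
  show "(vec4 (vec4 1 0 0 0) (vec4 0 0 1 0) (vec4 0 1 0 0) (vec4 0 0 0 1) :: bit^4^4) \<in> Gq" by (rule Gq_intro[of "(vec4 (vec4 1 0 0 0) (vec4 0 0 1 0) (vec4 0 1 0 0) (vec4 0 0 0 1) :: bit^4^4)"]) (simp_all add: mm_vec4 vm_vec4 mat1_vec4 SC_def set_eq_subset)
qed (simp add: ln8_def ln13_def set_eq_subset)
lemma tU16: "\<exists>U\<in>Gq. (*v) U ` ln8 = ln16"
proof (rule bexI[of _ "(vec4 (vec4 0 0 0 1) (vec4 0 1 0 1) (vec4 0 0 1 1) (vec4 1 1 1 1) :: bit^4^4)"])
  show "(vec4 (vec4 0 0 0 1) (vec4 0 1 0 1) (vec4 0 0 1 1) (vec4 1 1 1 1) :: bit^4^4) \<in> Gq" by (rule Gq_intro[of "(vec4 (vec4 1 1 1 1) (vec4 1 1 0 0) (vec4 1 0 1 0) (vec4 1 0 0 0) :: bit^4^4)"]) (simp_all add: mm_vec4 vm_vec4 mat1_vec4 SC_def set_eq_subset)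
qed (simp add: ln8_def ln16_def set_eq_subset)
lemma tT16: "\<exists>U\<in>Gq. (*v) U ` ln16 = ln8"
proof (rule bexI[of _ "(vec4 (vec4 1 1 1 1) (vec4 1 1 0 0) (vec4 1 0 1 0) (vec4 1 0 0 0) :: bit^4^4)"])
  show "(vec4 (vec4 1 1 1 1) (vec4 1 1 0 0) (vec4 1 0 1 0) (vec4 1 0 0 0) :: bit^4^4) \<in> Gq" by (rule Gq_intro[of "(vec4 (vec4 0 0 0 1) (vec4 0 1 0 1) (vec4 0 0 1 1) (vec4 1 1 1 1) :: bit^4^4)"]) (simp_all add: mm_vec4 vm_vec4 mat1_vec4 SC_def set_eq_subset)
qed (simp add: ln8_def ln16_def set_eq_subset)
lemma tU21: "\<exists>U\<in>Gq. (*v) U ` ln8 = ln21"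
proof (rule bexI[of _ "(vec4 (vec4 0 0 0 1) (vec4 0 0 1 0) (vec4 0 1 0 0) (vec4 1 0 0 0) :: bit^4^4)"])
  show "(vec4 (vec4 0 0 0 1) (vec4 0 0 1 0) (vec4 0 1 0 0) (vec4 1 0 0 0) :: bit^4^4) \<in> Gq" by (rule Gq_intro[of "(vec4 (vec4 0 0 0 1) (vec4 0 0 1 0) (vec4 0 1 0 0) (vec4 1 0 0 0) :: bit^4^4)"]) (simp_all add: mm_vec4 vm_vec4 mat1_vec4 SC_def set_eq_subset)
qed (simp add: ln8_def ln21_def set_eq_subset)
lemma tT21: "\<exists>U\<in>Gq. (*v) U ` ln21 = ln8"
proof (rule bexI[of _ "(vec4 (vec4 0 0 0 1) (vec4 0 0 1 0) (vec4 0 1 0 0) (vec4 1 0 0 0) :: bit^4^4)"])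
  show "(vec4 (vec4 0 0 0 1) (vec4 0 0 1 0) (vec4 0 1 0 0) (vec4 1 0 0 0) :: bit^4^4) \<in> Gq" by (rule Gq_intro[of "(vec4 (vec4 0 0 0 1) (vec4 0 0 1 0) (vec4 0 1 0 0) (vec4 1 0 0 0) :: bit^4^4)"]) (simp_all add: mm_vec4 vm_vec4 mat1_vec4 SC_def set_eq_subset)
qed (simp add: ln8_def ln21_def set_eq_subset)
lemma tU24: "\<exists>U\<in>Gq. (*v) U ` ln8 = ln24"
proof (rule bexI[of _ "(vec4 (vec4 0 0 0 1) (vec4 0 0 1 1) (vec4 0 1 0 1) (vec4 1 1 1 1) :: bit^4^4)"])
  show "(vec4 (vec4 0 0 0 1) (vec4 0 0 1 1) (vec4 0 1 0 1) (vec4 1 1 1 1) :: bit^4^4) \<in> Gq" by (rule Gq_intro[of "(vec4 (vec4 1 1 1 1) (vec4 1 0 1 0) (vec4 1 1 0 0) (vec4 1 0 0 0) :: bit^4^4)"]) (simp_all add: mm_vec4 vm_vec4 mat1_vec4 SC_def set_eq_subset)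
qed (simp add: ln8_def ln24_def set_eq_subset)
lemma tT24: "\<exists>U\<in>Gq. (*v) U ` ln24 = ln8"
proof (rule bexI[of _ "(vec4 (vec4 1 1 1 1) (vec4 1 0 1 0) (vec4 1 1 0 0) (vec4 1 0 0 0) :: bit^4^4)"])
  show "(vec4 (vec4 1 1 1 1) (vec4 1 0 1 0) (vec4 1 1 0 0) (vec4 1 0 0 0) :: bit^4^4) \<in> Gq" by (rule Gq_intro[of "(vec4 (vec4 0 0 0 1) (vec4 0 0 1 1) (vec4 0 1 0 1) (vec4 1 1 1 1) :: bit^4^4)"]) (simp_all add: mm_vec4 vm_vec4 mat1_vec4 SC_def set_eq_subset)
qed (simp add: ln8_def ln24_def set_eq_subset)
lemma tU10: "\<exists>U\<in>Gq. (*v) U ` ln8 = ln10"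
proof (rule bexI[of _ "(vec4 (vec4 0 0 0 1) (vec4 0 1 0 1) (vec4 0 0 1 1) (vec4 1 0 0 1) :: bit^4^4)"])
  show "(vec4 (vec4 0 0 0 1) (vec4 0 1 0 1) (vec4 0 0 1 1) (vec4 1 0 0 1) :: bit^4^4) \<in> Gq" by (rule Gq_intro[of "(vec4 (vec4 1 0 0 1) (vec4 1 1 0 0) (vec4 1 0 1 0) (vec4 1 0 0 0) :: bit^4^4)"]) (simp_all add: mm_vec4 vm_vec4 mat1_vec4 SC_def set_eq_subset)
qed (simp add: ln8_def ln10_def set_eq_subset)
lemma tT10: "\<exists>U\<in>Gq. (*v) U ` ln10 = ln8"
proof (rule bexI[of _ "(vec4 (vec4 1 0 0 1) (vec4 1 1 0 0) (vec4 1 0 1 0) (vec4 1 0 0 0) :: bit^4^4)"])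
  show "(vec4 (vec4 1 0 0 1) (vec4 1 1 0 0) (vec4 1 0 1 0) (vec4 1 0 0 0) :: bit^4^4) \<in> Gq" by (rule Gq_intro[of "(vec4 (vec4 0 0 0 1) (vec4 0 1 0 1) (vec4 0 0 1 1) (vec4 1 0 0 1) :: bit^4^4)"]) (simp_all add: mm_vec4 vm_vec4 mat1_vec4 SC_def set_eq_subset)
qed (simp add: ln8_def ln10_def set_eq_subset)
lemma tU18: "\<exists>U\<in>Gq. (*v) U ` ln8 = ln18"
proof (rule bexI[of _ "(vec4 (vec4 0 0 0 1) (vec4 0 1 0 0) (vec4 0 0 1 0) (vec4 1 1 1 0) :: bit^4^4)"])
  show "(vec4 (vec4 0 0 0 1) (vec4 0 1 0 0) (vec4 0 0 1 0) (vec4 1 1 1 0) :: bit^4^4) \<in> Gq" by (rule Gq_intro[of "(vec4 (vec4 0 1 1 1) (vec4 0 1 0 0) (vec4 0 0 1 0) (vec4 1 0 0 0) :: bit^4^4)"]) (simp_all add: mm_vec4 vm_vec4 mat1_vec4 SC_def set_eq_subset)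
qed (simp add: ln8_def ln18_def set_eq_subset)
lemma tT18: "\<exists>U\<in>Gq. (*v) U ` ln18 = ln8"
proof (rule bexI[of _ "(vec4 (vec4 0 1 1 1) (vec4 0 1 0 0) (vec4 0 0 1 0) (vec4 1 0 0 0) :: bit^4^4)"])
  show "(vec4 (vec4 0 1 1 1) (vec4 0 1 0 0) (vec4 0 0 1 0) (vec4 1 0 0 0) :: bit^4^4) \<in> Gq" by (rule Gq_intro[of "(vec4 (vec4 0 0 0 1) (vec4 0 1 0 0) (vec4 0 0 1 0) (vec4 1 1 1 0) :: bit^4^4)"]) (simp_all add: mm_vec4 vm_vec4 mat1_vec4 SC_def set_eq_subset)
qed (simp add: ln8_def ln18_def set_eq_subset)
lemma tU20: "\<exists>U\<in>Gq. (*v) U ` ln8 = ln20"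
proof (rule bexI[of _ "(vec4 (vec4 0 0 0 1) (vec4 0 0 1 1) (vec4 0 1 0 1) (vec4 1 0 0 1) :: bit^4^4)"])
  show "(vec4 (vec4 0 0 0 1) (vec4 0 0 1 1) (vec4 0 1 0 1) (vec4 1 0 0 1) :: bit^4^4) \<in> Gq" by (rule Gq_intro[of "(vec4 (vec4 1 0 0 1) (vec4 1 0 1 0) (vec4 1 1 0 0) (vec4 1 0 0 0) :: bit^4^4)"]) (simp_all add: mm_vec4 vm_vec4 mat1_vec4 SC_def set_eq_subset)
qed (simp add: ln8_def ln20_def set_eq_subset)
lemma tT20: "\<exists>U\<in>Gq. (*v) U ` ln20 = ln8"
proof (rule bexI[of _ "(vec4 (vec4 1 0 0 1) (vec4 1 0 1 0) (vec4 1 1 0 0) (vec4 1 0 0 0) :: bit^4^4)"])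
  show "(vec4 (vec4 1 0 0 1) (vec4 1 0 1 0) (vec4 1 1 0 0) (vec4 1 0 0 0) :: bit^4^4) \<in> Gq" by (rule Gq_intro[of "(vec4 (vec4 0 0 0 1) (vec4 0 0 1 1) (vec4 0 1 0 1) (vec4 1 0 0 1) :: bit^4^4)"]) (simp_all add: mm_vec4 vm_vec4 mat1_vec4 SC_def set_eq_subset)
qed (simp add: ln8_def ln20_def set_eq_subset)
lemma tU26: "\<exists>U\<in>Gq. (*v) U ` ln8 = ln26"
proof (rule bexI[of _ "(vec4 (vec4 0 0 0 1) (vec4 0 0 1 0) (vec4 0 1 0 0) (vec4 1 1 1 0) :: bit^4^4)"])
  show "(vec4 (vec4 0 0 0 1) (vec4 0 0 1 0) (vec4 0 1 0 0) (vec4 1 1 1 0) :: bit^4^4) \<in> Gq" by (rule Gq_intro[of "(vec4 (vec4 0 1 1 1) (vec4 0 0 1 0) (vec4 0 1 0 0) (vec4 1 0 0 0) :: bit^4^4)"]) (simp_all add: mm_vec4 vm_vec4 mat1_vec4 SC_def set_eq_subset)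
qed (simp add: ln8_def ln26_def set_eq_subset)
lemma tT26: "\<exists>U\<in>Gq. (*v) U ` ln26 = ln8"
proof (rule bexI[of _ "(vec4 (vec4 0 1 1 1) (vec4 0 0 1 0) (vec4 0 1 0 0) (vec4 1 0 0 0) :: bit^4^4)"])
  show "(vec4 (vec4 0 1 1 1) (vec4 0 0 1 0) (vec4 0 1 0 0) (vec4 1 0 0 0) :: bit^4^4) \<in> Gq" by (rule Gq_intro[of "(vec4 (vec4 0 0 0 1) (vec4 0 0 1 0) (vec4 0 1 0 0) (vec4 1 1 1 0) :: bit^4^4)"]) (simp_all add: mm_vec4 vm_vec4 mat1_vec4 SC_def set_eq_subset)
qed (simp add: ln8_def ln26_def set_eq_subset)
lemma tU33: "\<exists>U\<in>Gq. (*v) U ` ln8 = ln33"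
proof (rule bexI[of _ "(vec4 (vec4 1 1 1 0) (vec4 0 0 1 0) (vec4 0 1 0 0) (vec4 0 1 1 1) :: bit^4^4)"])
  show "(vec4 (vec4 1 1 1 0) (vec4 0 0 1 0) (vec4 0 1 0 0) (vec4 0 1 1 1) :: bit^4^4) \<in> Gq" by (rule Gq_intro[of "(vec4 (vec4 1 1 1 0) (vec4 0 0 1 0) (vec4 0 1 0 0) (vec4 0 1 1 1) :: bit^4^4)"]) (simp_all add: mm_vec4 vm_vec4 mat1_vec4 SC_def set_eq_subset)
qed (simp add: ln8_def ln33_def set_eq_subset)
lemma tT33: "\<exists>U\<in>Gq. (*v) U ` ln33 = ln8"
proof (rule bexI[of _ "(vec4 (vec4 1 1 1 0) (vec4 0 0 1 0) (vec4 0 1 0 0) (vec4 0 1 1 1) :: bit^4^4)"])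
  show "(vec4 (vec4 1 1 1 0) (vec4 0 0 1 0) (vec4 0 1 0 0) (vec4 0 1 1 1) :: bit^4^4) \<in> Gq" by (rule Gq_intro[of "(vec4 (vec4 1 1 1 0) (vec4 0 0 1 0) (vec4 0 1 0 0) (vec4 0 1 1 1) :: bit^4^4)"]) (simp_all add: mm_vec4 vm_vec4 mat1_vec4 SC_def set_eq_subset)
qed (simp add: ln8_def ln33_def set_eq_subset)
lemma tU34: "\<exists>U\<in>Gq. (*v) U ` ln8 = ln34"
proof (rule bexI[of _ "(vec4 (vec4 1 1 1 0) (vec4 0 0 1 0) (vec4 0 1 0 0) (vec4 0 0 0 1) :: bit^4^4)"])
  show "(vec4 (vec4 1 1 1 0) (vec4 0 0 1 0) (vec4 0 1 0 0) (vec4 0 0 0 1) :: bit^4^4) \<in> Gq" by (rule Gq_intro[of "(vec4 (vec4 1 1 1 0) (vec4 0 0 1 0) (vec4 0 1 0 0) (vec4 0 0 0 1) :: bit^4^4)"]) (simp_all add: mm_vec4 vm_vec4 mat1_vec4 SC_def set_eq_subset)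
qed (simp add: ln8_def ln34_def set_eq_subset)
lemma tT34: "\<exists>U\<in>Gq. (*v) U ` ln34 = ln8"
proof (rule bexI[of _ "(vec4 (vec4 1 1 1 0) (vec4 0 0 1 0) (vec4 0 1 0 0) (vec4 0 0 0 1) :: bit^4^4)"])
  show "(vec4 (vec4 1 1 1 0) (vec4 0 0 1 0) (vec4 0 1 0 0) (vec4 0 0 0 1) :: bit^4^4) \<in> Gq" by (rule Gq_intro[of "(vec4 (vec4 1 1 1 0) (vec4 0 0 1 0) (vec4 0 1 0 0) (vec4 0 0 0 1) :: bit^4^4)"]) (simp_all add: mm_vec4 vm_vec4 mat1_vec4 SC_def set_eq_subset)
qed (simp add: ln8_def ln34_def set_eq_subset)
lemma orb5: "\<forall>V\<in>set O5. line_orbit (sng V) = sng ` set O5"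
proof (rule ballI, rule orbit_gen[where k="(0, 1, False)" and R="ln8"], assumption)
  show "set O5 \<subseteq> set LV35" by (simp add: O5_def LV35_def)
  show "\<forall>W\<in>set O5. iv W = (0, 1, False)" by (simp add: O5_def vals_iv)
  show "\<forall>W\<in>set LV35. iv W = (0, 1, False) \<longrightarrow> W \<in> set O5" by (simp add: O5_def LV35_def vals_iv)
  show "\<forall>W\<in>set O5. \<exists>U\<in>Gq. (*v) U ` ln8 = W" by (simp only: O5_def list.set ball_simps insert_iff empty_iff) (intro conjI TrueI tU8 tU11 tU13 tU16 tU21 tU24 tU10 tU18 tU20 tU26 tU33 tU34)
  show "\<forall>W\<in>set O5. \<exists>U\<in>Gq. (*v) U ` W = ln8" by (simp only: O5_def list.set ball_simps insert_iff empty_iff) (intro conjI TrueI tT8 tT11 tT13 tT16 tT21 tT24 tT10 tT18 tT20 tT26 tT33 tT34)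
qed
lemma img_const: "(\<forall>V\<in>A. f V = c) \<Longrightarrow> A \<noteq> {} \<Longrightarrow> f ` A = {c}" by auto
lemma card_sng_set: "distinct l \<Longrightarrow> card (sng ` set l) = length l"
  by (metis card_image distinct_card inj_sng inj_on_subset subset_UNIV)
lemma orb_neq: "R \<in> set Oa \<Longrightarrow> iv R \<noteq> k \<Longrightarrow> \<forall>W\<in>set Ob. iv W = k \<Longrightarrow> sng ` set Oa \<noteq> sng ` set Ob"
proof
  assume r: "R \<in> set Oa" "iv R \<noteq> k" "\<forall>W\<in>set Ob. iv W = k" and e: "sng ` set Oa = sng ` set Ob"
  have "sng R \<in> sng ` set Ob" using r(1) e by blast
  then have "R \<in> set Ob" using inj_sng by (auto dest: injD)
  then show False using r by blast
qed
lemma LV_split: "set LV35 = set O0 \<union> set O1 \<union> set O2 \<union> set O3 \<union> set O4 \<union> set O5"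
  unfolding set_eq_subset by (simp add: LV35_def O0_def O1_def O2_def O3_def O4_def O5_def)
lemma line_orbits_eq: "(line_orbits :: (bit^4) set set set set) = {sng ` set O0, sng ` set O1, sng ` set O2, sng ` set O3, sng ` set O4, sng ` set O5}"
proof -
  have e0: "(line_orbits :: (bit^4) set set set set) = (\<lambda>V. line_orbit (sng V)) ` set LV35"
    unfolding line_orbits_def pg_lines_eq image_image ..
  have i0: "(\<lambda>V. line_orbit (sng V)) ` set O0 = {sng ` set O0}" by (rule img_const[OF orb0]) (simp only: O0_def list.set insert_not_empty simp_thms)
  have i1: "(\<lambda>V. line_orbit (sng V)) ` set O1 = {sng ` set O1}" by (rule img_const[OF orb1]) (simp only: O1_def list.set insert_not_empty simp_thms)
  have i2: "(\<lambda>V. line_orbit (sng V)) ` set O2 = {sng ` set O2}" by (rule img_const[OF orb2]) (simp only: O2_def list.set insert_not_empty simp_thms)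
  have i3: "(\<lambda>V. line_orbit (sng V)) ` set O3 = {sng ` set O3}" by (rule img_const[OF orb3]) (simp only: O3_def list.set insert_not_empty simp_thms)
  have i4: "(\<lambda>V. line_orbit (sng V)) ` set O4 = {sng ` set O4}" by (rule img_const[OF orb4]) (simp only: O4_def list.set insert_not_empty simp_thms)
  have i5: "(\<lambda>V. line_orbit (sng V)) ` set O5 = {sng ` set O5}" by (rule img_const[OF orb5]) (simp only: O5_def list.set insert_not_empty simp_thms)
  show ?thesis unfolding e0 LV_split image_Un i0 i1 i2 i3 i4 i5 by (simp only: Un_insert_left Un_empty_left)
qed
lemma oneq0_1: "sng ` set O0 \<noteq> sng ` set O1" by (rule orb_neq[of ln3 _ "(0, 3, False)"]) (simp_all add: O0_def O1_def vals_iv)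
lemma oneq0_2: "sng ` set O0 \<noteq> sng ` set O2" by (rule orb_neq[of ln3 _ "(1, 1, True)"]) (simp_all add: O0_def O2_def vals_iv)
lemma oneq0_3: "sng ` set O0 \<noteq> sng ` set O3" by (rule orb_neq[of ln3 _ "(0, 0, True)"]) (simp_all add: O0_def O3_def vals_iv)
lemma oneq0_4: "sng ` set O0 \<noteq> sng ` set O4" by (rule orb_neq[of ln3 _ "(1, 0, False)"]) (simp_all add: O0_def O4_def vals_iv)
lemma oneq0_5: "sng ` set O0 \<noteq> sng ` set O5" by (rule orb_neq[of ln3 _ "(0, 1, False)"]) (simp_all add: O0_def O5_def vals_iv)
lemma oneq1_2: "sng ` set O1 \<noteq> sng ` set O2" by (rule orb_neq[of ln32 _ "(1, 1, True)"]) (simp_all add: O1_def O2_def vals_iv)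
lemma oneq1_3: "sng ` set O1 \<noteq> sng ` set O3" by (rule orb_neq[of ln32 _ "(0, 0, True)"]) (simp_all add: O1_def O3_def vals_iv)
lemma oneq1_4: "sng ` set O1 \<noteq> sng ` set O4" by (rule orb_neq[of ln32 _ "(1, 0, False)"]) (simp_all add: O1_def O4_def vals_iv)
lemma oneq1_5: "sng ` set O1 \<noteq> sng ` set O5" by (rule orb_neq[of ln32 _ "(0, 1, False)"]) (simp_all add: O1_def O5_def vals_iv)
lemma oneq2_3: "sng ` set O2 \<noteq> sng ` set O3" by (rule orb_neq[of ln2 _ "(0, 0, True)"]) (simp_all add: O2_def O3_def vals_iv)
lemma oneq2_4: "sng ` set O2 \<noteq> sng ` set O4" by (rule orb_neq[of ln2 _ "(1, 0, False)"]) (simp_all add: O2_def O4_def vals_iv)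
lemma oneq2_5: "sng ` set O2 \<noteq> sng ` set O5" by (rule orb_neq[of ln2 _ "(0, 1, False)"]) (simp_all add: O2_def O5_def vals_iv)
lemma oneq3_4: "sng ` set O3 \<noteq> sng ` set O4" by (rule orb_neq[of ln7 _ "(1, 0, False)"]) (simp_all add: O3_def O4_def vals_iv)
lemma oneq3_5: "sng ` set O3 \<noteq> sng ` set O5" by (rule orb_neq[of ln7 _ "(0, 1, False)"]) (simp_all add: O3_def O5_def vals_iv)
lemma oneq4_5: "sng ` set O4 \<noteq> sng ` set O5" by (rule orb_neq[of ln0 _ "(0, 1, False)"]) (simp_all add: O4_def O5_def vals_iv)
lemma orbits_distinct: "distinct [sng ` set O0, sng ` set O1, sng ` set O2, sng ` set O3, sng ` set O4, sng ` set O5]"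
  using oneq0_1 oneq0_2 oneq0_3 oneq0_4 oneq0_5 oneq1_2 oneq1_3 oneq1_4 oneq1_5 oneq2_3 oneq2_4 oneq2_5 oneq3_4 oneq3_5 oneq4_5 by auto
lemma dist_RC: "distinct [ln3, ln6, ln31]" by (simp add: ln_defs set_eq_subset)
lemma dist_IA: "distinct [ln32]" by (simp add: ln_defs set_eq_subset)
lemma dist_UG2: "distinct [ln2, ln27, ln28]" by (simp add: ln_defs set_eq_subset)
lemma dist_RA: "distinct [ln7, ln14, ln29]" by (simp add: ln_defs set_eq_subset)
lemma dist_IC: "distinct [ln30]" by (simp add: ln_defs set_eq_subset)
lemma dist_Tr: "distinct [ln0, ln19, ln25]" by (simp add: ln_defs set_eq_subset)
lemma dist_UG1: "distinct [ln1, ln9, ln17]" by (simp add: ln_defs set_eq_subset)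
lemma dist_UnG: "distinct [ln4, ln5, ln12, ln15, ln22, ln23]" by (simp add: ln_defs set_eq_subset)
lemma dist_EG: "distinct [ln8, ln11, ln13, ln16, ln21, ln24]" by (simp add: ln_defs set_eq_subset)
lemma dist_EnG: "distinct [ln10, ln18, ln20, ln26, ln33, ln34]" by (simp add: ln_defs set_eq_subset)
lemma dist_O0: "distinct O0" by (simp add: O0_def ln_defs set_eq_subset)
lemma dist_O1: "distinct O1" by (simp add: O1_def ln_defs set_eq_subset)
lemma dist_O2: "distinct O2" by (simp add: O2_def ln_defs set_eq_subset)
lemma dist_O3: "distinct O3" by (simp add: O3_def ln_defs set_eq_subset)
lemma dist_O4: "distinct O4" by (simp add: O4_def ln_defs set_eq_subset)
lemma dist_O5: "distinct O5" by (simp add: O5_def ln_defs set_eq_subset)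
theorem theorem4p4:
  defines "L1 \<equiv> {L :: (bit ^ 4) set set. is_RC L}"
      and "L2 \<equiv> {L :: (bit ^ 4) set set. is_IA2 L}"
      and "L3 \<equiv> {L :: (bit ^ 4) set set. is_UG2 L}"
      and "RA \<equiv> {L :: (bit ^ 4) set set. is_RA L}"
      and "IC \<equiv> {L :: (bit ^ 4) set set. is_IC2 L}"
      and "Tr \<equiv> {L :: (bit ^ 4) set set. is_Tr L}"
      and "UG1 \<equiv> {L :: (bit ^ 4) set set. is_UG1 L}"
      and "UnG \<equiv> {L :: (bit ^ 4) set set. is_UnG L}"
      and "EG \<equiv> {L :: (bit ^ 4) set set. is_EG L}"
      and "EnG \<equiv> {L :: (bit ^ 4) set set. is_EnG2 L}"
  shows "(line_orbits :: (bit ^ 4) set set set set) =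
           {L1, L2, L3, RA \<union> IC, Tr \<union> UG1 \<union> UnG, EG \<union> EnG}
       \<and> card (line_orbits :: (bit ^ 4) set set set set) = 6
       \<and> card L1 = 3 \<and> card L2 = 1 \<and> card L3 = 3
       \<and> card RA = 3 \<and> card IC = 1 \<and> card (RA \<union> IC) = 4
       \<and> card Tr = 3 \<and> card UG1 = 3 \<and> card UnG = 6 \<and> card (Tr \<union> UG1 \<union> UnG) = 12
       \<and> card EG = 6 \<and> card EnG = 6 \<and> card (EG \<union> EnG) = 12"
proof -
  have c1: "L1 = sng ` set O0" unfolding L1_def O0_def by (rule cls_RC)
  have c2: "L2 = sng ` set O1" unfolding L2_def O1_def by (rule cls_IA)
  have c3: "L3 = sng ` set O2" unfolding L3_def O2_def by (rule cls_UG2)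
  have cRA': "RA = sng ` set [ln7, ln14, ln29]" unfolding RA_def by (rule cls_RA)
  have cIC': "IC = sng ` set [ln30]" unfolding IC_def by (rule cls_IC)
  have cTr': "Tr = sng ` set [ln0, ln19, ln25]" unfolding Tr_def by (rule cls_Tr)
  have cUG1': "UG1 = sng ` set [ln1, ln9, ln17]" unfolding UG1_def by (rule cls_UG1)
  have cUnG': "UnG = sng ` set [ln4, ln5, ln12, ln15, ln22, ln23]" unfolding UnG_def by (rule cls_UnG)
  have cEG': "EG = sng ` set [ln8, ln11, ln13, ln16, ln21, ln24]" unfolding EG_def by (rule cls_EG)
  have cEnG': "EnG = sng ` set [ln10, ln18, ln20, ln26, ln33, ln34]" unfolding EnG_def by (rule cls_EnG)
  have c4: "RA \<union> IC = sng ` set O3" unfolding cRA' cIC' O3_def by auto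
  have c5: "Tr \<union> UG1 \<union> UnG = sng ` set O4" unfolding cTr' cUG1' cUnG' O4_def by auto
  have c6: "EG \<union> EnG = sng ` set O5" unfolding cEG' cEnG' O5_def by auto
  have e: "(line_orbits :: (bit ^ 4) set set set set) = {L1, L2, L3, RA \<union> IC, Tr \<union> UG1 \<union> UnG, EG \<union> EnG}"
    unfolding line_orbits_eq c4 c5 c6 c1 c2 c3 ..
  have k0: "card (line_orbits :: (bit ^ 4) set set set set) = 6"
    unfolding line_orbits_eq using distinct_card[OF orbits_distinct] by simp
  have k1: "card L1 = 3" unfolding c1 card_sng_set[OF dist_O0] by (simp add: O0_def)
  have k2: "card L2 = 1" unfolding c2 card_sng_set[OF dist_O1] by (simp add: O1_def)
  have k3: "card L3 = 3" unfolding c3 card_sng_set[OF dist_O2] by (simp add: O2_def)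
  have k4: "card (RA \<union> IC) = 4" unfolding c4 card_sng_set[OF dist_O3] by (simp add: O3_def)
  have k5: "card (Tr \<union> UG1 \<union> UnG) = 12" unfolding c5 card_sng_set[OF dist_O4] by (simp add: O4_def)
  have k6: "card (EG \<union> EnG) = 12" unfolding c6 card_sng_set[OF dist_O5] by (simp add: O5_def)
  have kRA: "card RA = 3" unfolding cRA' card_sng_set[OF dist_RA] by simp
  have kIC: "card IC = 1" unfolding cIC' card_sng_set[OF dist_IC] by simp
  have kTr: "card Tr = 3" unfolding cTr' card_sng_set[OF dist_Tr] by simp
  have kUG1: "card UG1 = 3" unfolding cUG1' card_sng_set[OF dist_UG1] by simp
  have kUnG: "card UnG = 6" unfolding cUnG' card_sng_set[OF dist_UnG] by simp
  have kEG: "card EG = 6" unfolding cEG' card_sng_set[OF dist_EG] by simp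
  have kEnG: "card EnG = 6" unfolding cEnG' card_sng_set[OF dist_EnG] by simp
  show ?thesis using e k0 k1 k2 k3 k4 k5 k6 kRA kIC kTr kUG1 kUnG kEG kEnG by blast
qed

end
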